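(* Let $K$ be an alphabet space, $\sigma:K\to K^+$ a primitive generalized substitution, and $(X_\sigma,S)$ the generalized subshift it generates. Then: (1) $(X_\sigma,S)$ is minimal; (2) if moreover $\sigma$ is recognizable and aperiodic, then $(X_\sigma,S)$ is a self-induced minimal Cantor system, and $\sigma$ (acting on sequences) is a conjugacy from $(X_\sigma,S)$ to the induced system $(\sigma(X_\sigma),S_{\sigma(X_\sigma)})$.
   Context: An alphabet space is a compact zero-dimensional metric space $K$ with at least two points; $K^n$ is the set of words of length $n$ (with product topology), $K^+=\bigcup_{n\ge1}K^n$. A generalized substitution is a map $\sigma:K\to K^+$ such that $a\mapsto|\sigma(a)|$ is continuous and, for each $j$, the map $a\mapsto$ ($j$-th letter of $\sigma(a)$) is continuous on $\{a:|\sigma(a)|\ge j\}$. It extends to $K^+$ by concatenation (so it can be iterated) and to $K^{\mathbb Z}$ by $\sigma(\ldots x_{-1}.x_0x_1\ldots)=\ldots\sigma(x_{-1}).\sigma(x_0)\sigma(x_1)\ldots$ with $\sigma(x_0)$ starting at coordinate $0$. $\sigma$ is primitive if for every nonempty open $V\subset K$ there is $j$ such that for all $a\in K$ and all $k\ge j$ some letter of $\sigma^k(a)$ lies in $V$. The language $\mathcal L(\sigma,a)$ is the set of words $w\in K^+$ that are subwords of some $\sigma^j(a)$, $j\in\mathbb N$, or limits in $K^{|w|}$ of such words; $\mathcal L(\sigma)=\bigcup_{a\in K}\mathcal L(\sigma,a)$. $X_\sigma=\{\mathbf x\in K^{\mathbb Z}:\mathbf x[-n,n]\in\mathcal L(\sigma)\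 \forall n\ge0\}$, with the shift $S(\mathbf x)_i=x_{i+1}$. $\sigma$ is aperiodic if $X_\sigma$ contains no $S$-periodic point. $\sigma$ is recognizable if for every $\mathbf z\in X_\sigma$ there is a unique set of integers $\{n_k:k\in\mathbb Z\}$ and a unique $\mathbf x\in X_\sigma$ with $\sigma(x_k)=\mathbf z[n_k,n_{k+1}-1]$ for all $k$. For a minimal Cantor system $(X,T)$ and clopen $U$, the induced map is $T_U(x)=T^{r_U(x)}x$ with $r_U(x)=\inf\{n>0:T^nx\in U\}$; $(X,T)$ is self-induced if $(U,T_U)$ is conjugate to $(X,T)$ for some nonempty clopen $U\subsetneq X$. *)

theory Defs
  imports "HOL-Analysis.Analysis" "HOL-Library.Sublist"
begin

text \<open>In the main theorem the alphabet space K is the whole (metric) type 'a, i.e. K = UNIV.\<close>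

definition zero_dimensional_space :: "'a::topological_space set \<Rightarrow> bool" where
  "zero_dimensional_space K \<longleftrightarrow>
     (\<forall>U x. openin (top_of_set K) U \<and> x \<in> U \<longrightarrow>
        (\<exists>V. openin (top_of_set K) V \<and> closedin (top_of_set K) V \<and> x \<in> V \<and> V \<subseteq> U))"

definition alphabet_space :: "'a::metric_space set \<Rightarrow> bool" where
  "alphabet_space K \<longleftrightarrow> compact K \<and> zero_dimensional_space K
     \<and> (\<exists>a\<in>K. \<exists>b\<in>K. a \<noteq> b)"

definition gen_substitution :: "('a::metric_space \<Rightarrow> 'a list) \<Rightarrow> bool" where
  "gen_substitution \<sigma> \<longleftrightarrow>
     (\<forall>a. \<sigma> a \<noteq> []) \<and>
     continuous_on UNIV (\<lambda>a. length (\<sigma> a)) \<and>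
     (\<forall>j. continuous_on {a. j < length (\<sigma> a)} (\<lambda>a. \<sigma> a ! j))"

definition subst_word :: "('a \<Rightarrow> 'a list) \<Rightarrow> 'a list \<Rightarrow> 'a list" where
  "subst_word \<sigma> w = concat (map \<sigma> w)"

definition subst_iter :: "('a \<Rightarrow> 'a list) \<Rightarrow> nat \<Rightarrow> 'a \<Rightarrow> 'a list" where
  "subst_iter \<sigma> k a = (subst_word \<sigma> ^^ k) [a]"

definition primitive :: "('a::topological_space \<Rightarrow> 'a list) \<Rightarrow> bool" where
  "primitive \<sigma> \<longleftrightarrow>
     (\<forall>V. open V \<and> V \<noteq> {} \<longrightarrow>
        (\<exists>j. \<forall>a. \<forall>k\<ge>j. \<exists>x\<in>set (subst_iter \<sigma> k a). x \<in> V))"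

text \<open>Language: subwords of some sigma^j(a), or limits in K^|w| (product topology) of such.\<close>
definition language_of :: "('a::metric_space \<Rightarrow> 'a list) \<Rightarrow> 'a \<Rightarrow> 'a list set" where
  "language_of \<sigma> a = {w. w \<noteq> [] \<and>
     (\<forall>e>0. \<exists>j u. sublist u (subst_iter \<sigma> j a) \<and> length u = length w \<and>
                 (\<forall>i<length w. dist (u ! i) (w ! i) < e))}"

definition language :: "('a::metric_space \<Rightarrow> 'a list) \<Rightarrow> 'a list set" where
  "language \<sigma> = (\<Union>a. language_of \<sigma> a)"

definition window :: "(int \<Rightarrow> 'a) \<Rightarrow> int \<Rightarrow> int \<Rightarrow> 'a list" where
  "window x m n = map x [m..n]"

definition subshift :: "('a::metric_space \<Rightarrow> 'a list) \<Rightarrow> (int \<Rightarrow> 'a) set" where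
  "subshift \<sigma> = {x. \<forall>n::nat. window x (- int n) (int n) \<in> language \<sigma>}"

definition shift :: "(int \<Rightarrow> 'a) \<Rightarrow> (int \<Rightarrow> 'a)" where
  "shift x = (\<lambda>i. x (i + 1))"

text \<open>Position in sigma(x) at which the block sigma(x_k) starts (sigma(x_0) starts at 0).\<close>
definition subst_pos :: "('a \<Rightarrow> 'a list) \<Rightarrow> (int \<Rightarrow> 'a) \<Rightarrow> int \<Rightarrow> int" where
  "subst_pos \<sigma> x k =
     (if k \<ge> 0 then int (\<Sum>i\<in>{0..<k}. length (\<sigma> (x i)))
      else - int (\<Sum>i\<in>{k..<0}. length (\<sigma> (x i))))"

definition subst_seq :: "('a \<Rightarrow> 'a list) \<Rightarrow> (int \<Rightarrow> 'a) \<Rightarrow> (int \<Rightarrow> 'a)" where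
  "subst_seq \<sigma> x = (\<lambda>n.
     let k = (THE k. subst_pos \<sigma> x k \<le> n \<and> n < subst_pos \<sigma> x (k + 1))
     in \<sigma> (x k) ! nat (n - subst_pos \<sigma> x k))"

definition aperiodic :: "('a::metric_space \<Rightarrow> 'a list) \<Rightarrow> bool" where
  "aperiodic \<sigma> \<longleftrightarrow> \<not> (\<exists>x\<in>subshift \<sigma>. \<exists>p::nat. p > 0 \<and> (shift ^^ p) x = x)"

text \<open>Recognizability: unique cutting set {n_k} (indexed with n_0 \<le> 0 < n_1) and unique x.\<close>
definition recognizable :: "('a::metric_space \<Rightarrow> 'a list) \<Rightarrow> bool" where
  "recognizable \<sigma> \<longleftrightarrow>
     (\<forall>z\<in>subshift \<sigma>. \<exists>!(C, x). x \<in> subshift \<sigma> \<and>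
        (\<exists>n::int \<Rightarrow> int. C = range n \<and> n 0 \<le> 0 \<and> 0 < n 1 \<and>
           (\<forall>k. \<sigma> (x k) = window z (n k) (n (k + 1) - 1))))"

definition minimal_system :: "'b::topological_space set \<Rightarrow> ('b \<Rightarrow> 'b) \<Rightarrow> bool" where
  "minimal_system X T \<longleftrightarrow> X \<noteq> {} \<and>
     (\<forall>Y. Y \<subseteq> X \<and> closedin (top_of_set X) Y \<and> Y \<noteq> {} \<and> T ` Y \<subseteq> Y \<longrightarrow> Y = X)"

definition totally_disconnected_set :: "'b::topological_space set \<Rightarrow> bool" where
  "totally_disconnected_set X \<longleftrightarrow>
     (\<forall>C. C \<subseteq> X \<and> connected C \<longrightarrow> (\<forall>x\<in>C. \<forall>y\<in>C. x = y))"

definition cantor_set :: "'b::metric_space set \<Rightarrow> bool" where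
  "cantor_set X \<longleftrightarrow> X \<noteq> {} \<and> compact X \<and> totally_disconnected_set X \<and> (\<forall>x\<in>X. x islimpt X)"

definition minimal_cantor_system :: "'b::metric_space set \<Rightarrow> ('b \<Rightarrow> 'b) \<Rightarrow> bool" where
  "minimal_cantor_system X T \<longleftrightarrow> cantor_set X \<and>
     (\<exists>g. homeomorphism X X T g) \<and> minimal_system X T"

definition return_time :: "('b \<Rightarrow> 'b) \<Rightarrow> 'b set \<Rightarrow> 'b \<Rightarrow> nat" where
  "return_time T U x = (LEAST n. n > 0 \<and> (T ^^ n) x \<in> U)"

definition induced_map :: "('b \<Rightarrow> 'b) \<Rightarrow> 'b set \<Rightarrow> 'b \<Rightarrow> 'b" where
  "induced_map T U x = (T ^^ return_time T U x) x"

definition conjugacy :: "('b::topological_space \<Rightarrow> 'c::topological_space) \<Rightarrow>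
     'b set \<Rightarrow> ('b \<Rightarrow> 'b) \<Rightarrow> 'c set \<Rightarrow> ('c \<Rightarrow> 'c) \<Rightarrow> bool" where
  "conjugacy \<phi> X T Y R \<longleftrightarrow> (\<exists>g. homeomorphism X Y \<phi> g) \<and> (\<forall>x\<in>X. \<phi> (T x) = R (\<phi> x))"

definition self_induced :: "'b::metric_space set \<Rightarrow> ('b \<Rightarrow> 'b) \<Rightarrow> bool" where
  "self_induced X T \<longleftrightarrow>
     (\<exists>U. U \<noteq> {} \<and> U \<subset> X \<and> openin (top_of_set X) U \<and> closedin (top_of_set X) U \<and>
          (\<exists>\<phi>. conjugacy \<phi> U (induced_map T U) X T))"

end

theory Submission
  imports Defs
begin

definition near :: "real \<Rightarrow> 'a::metric_space list \<Rightarrow> 'a list \<Rightarrow> bool" where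
  "near e u v \<longleftrightarrow> list_all2 (\<lambda>x y. dist x y < e) u v"

definition occ :: "real \<Rightarrow> 'a::metric_space list \<Rightarrow> 'a list \<Rightarrow> nat \<Rightarrow> bool" where
  "occ e w V t \<longleftrightarrow> t + length w \<le> length V \<and> (\<forall>i<length w. dist (V!(t+i)) (w!i) < e)"

definition exocc :: "'a list \<Rightarrow> 'a list \<Rightarrow> nat \<Rightarrow> bool" where
  "exocc w V t \<longleftrightarrow> t + length w \<le> length V \<and> (\<forall>i<length w. V!(t+i) = w!i)"

lemma occ_trans:
  assumes "occ e1 w v t" "occ e2 v V s"
  shows "occ (e1+e2) w V (s+t)"
  unfolding occ_def
proof safe
  show "s + t + length w \<le> length V" using assms unfolding occ_def by auto
  fix i assume i: "i < length w"
  have "dist (V ! (s + t + i)) (w ! i) \<le> dist (V ! (s + (t + i))) (v ! (t+i)) + dist (v!(t+i)) (w ! i)"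
    by (simp add: add.assoc dist_triangle)
  also have "\<dots> < e2 + e1" using assms i unfolding occ_def
    by (intro add_strict_mono) auto
  finally show "dist (V ! (s + t + i)) (w ! i) < e1 + e2" by simp
qed

lemma occ_mono: "occ e w V t \<Longrightarrow> e \<le> e' \<Longrightarrow> occ e' w V t"
  unfolding occ_def by force

lemma exocc_occ: "exocc w V t \<Longrightarrow> e > 0 \<Longrightarrow> occ e w V t"
  unfolding occ_def exocc_def by auto

lemma exocc_trans: "exocc w v t \<Longrightarrow> exocc v V s \<Longrightarrow> exocc w V (s+t)"
  unfolding exocc_def by (auto simp: add.assoc)

lemma occ_exocc_trans: "occ e w v t \<Longrightarrow> exocc v V s \<Longrightarrow> occ e w V (s+t)"
  unfolding exocc_def occ_def by (auto simp: add.assoc)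

lemma exocc_occ_trans: "exocc w v t \<Longrightarrow> occ e v V s \<Longrightarrow> occ e w V (s+t)"
  unfolding exocc_def occ_def by (auto simp: add.assoc) (metis add.assoc less_le_trans add_less_cancel_left nat_add_left_cancel_less trans_less_add2)

lemma exocc_self: "exocc w w 0"
  unfolding exocc_def by auto

lemma sublist_exocc: "sublist u V \<Longrightarrow> \<exists>t. exocc u V t"
proof -
  assume "sublist u V"
  then obtain ps ss where "V = ps @ u @ ss" unfolding sublist_def by blast
  then have "exocc u V (length ps)" unfolding exocc_def by (auto simp: nth_append)
  then show ?thesis by blast
qed

lemma exocc_sublist: "exocc u V t \<Longrightarrow> sublist u V"
proof -
  assume a: "exocc u V t"
  have "u = take (length u) (drop t V)"
    using a unfolding exocc_def by (intro nth_equalityI) auto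
  moreover have "V = take t V @ take (length u) (drop t V) @ drop (length u) (drop t V)"
    by (metis append_take_drop_id)
  ultimately show ?thesis unfolding sublist_def by metis
qed

lemma occ_take_drop:
  assumes "occ e w V t"
  shows "list_all2 (\<lambda>x y. dist x y < e) (take (length w) (drop t V)) w"
    and "exocc (take (length w) (drop t V)) V t"
  using assms unfolding occ_def exocc_def
  by (auto simp: list_all2_conv_all_nth add.commute)

lemma language_of_iff:
  "w \<in> language_of \<sigma> a \<longleftrightarrow> w \<noteq> [] \<and> (\<forall>e>0. \<exists>j t. occ e w (subst_iter \<sigma> j a) t)"
proof
  assume w: "w \<in> language_of \<sigma> a"
  show "w \<noteq> [] \<and> (\<forall>e>0. \<exists>j t. occ e w (subst_iter \<sigma> j a) t)"
  proof (intro conjI allI impI)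
    show "w \<noteq> []" using w unfolding language_of_def by auto
    fix e :: real assume "e > 0"
    then obtain j u where u: "sublist u (subst_iter \<sigma> j a)" "length u = length w"
      "\<forall>i<length w. dist (u ! i) (w ! i) < e"
      using w unfolding language_of_def by blast
    obtain t where "exocc u (subst_iter \<sigma> j a) t" using sublist_exocc u(1) by blast
    moreover have "occ e w u 0" using u unfolding occ_def by auto
    ultimately have "occ e w (subst_iter \<sigma> j a) (t+0)" by (rule occ_exocc_trans[rotated])
    then show "\<exists>j t. occ e w (subst_iter \<sigma> j a) t" by auto
  qed
next
  assume h: "w \<noteq> [] \<and> (\<forall>e>0. \<exists>j t. occ e w (subst_iter \<sigma> j a) t)"
  show "w \<in> language_of \<sigma> a"
    unfolding language_of_def
  proof (safe)
    show "w = [] \<Longrightarrow> False" using h by auto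
    fix e :: real assume "e > 0"
    then obtain j t where o: "occ e w (subst_iter \<sigma> j a) t" using h by blast
    let ?u = "take (length w) (drop t (subst_iter \<sigma> j a))"
    have "sublist ?u (subst_iter \<sigma> j a)" using occ_take_drop(2)[OF o] exocc_sublist by blast
    moreover have la: "list_all2 (\<lambda>x y. dist x y < e) ?u w" using occ_take_drop(1)[OF o] .
    moreover have "length ?u = length w" by (rule list_all2_lengthD[OF la])
    moreover have "\<forall>i<length w. dist (?u!i) (w!i) < e" using la list_all2_nthD2[OF la] by blast
    ultimately show "\<exists>j u. sublist u (subst_iter \<sigma> j a) \<and> length u = length w \<and>
                 (\<forall>i<length w. dist (u ! i) (w ! i) < e)"
      by blast
  qed
qed

lemma block_lemma:
  assumes "\<forall>c\<in>set ws. length (g c) \<le> M"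
    and "t + L \<le> length (concat (map g ws))" and "2*M \<le> L" and "0 < L"
  shows "\<exists>c\<in>set ws. \<exists>s. t \<le> s \<and> s + length (g c) \<le> t + L \<and> exocc (g c) (concat (map g ws)) s"
  using assms
proof (induction ws arbitrary: t)
  case Nil
  then show ?case by simp
next
  case (Cons c ws)
  have cc: "concat (map g (c # ws)) = g c @ concat (map g ws)" by simp
  show ?case
  proof (cases "length (g c) \<le> t")
    case True
    have "\<exists>c'\<in>set ws. \<exists>s. t - length (g c) \<le> s \<and> s + length (g c') \<le> t - length (g c) + L \<and>
          exocc (g c') (concat (map g ws)) s"
      using Cons.prems True by (intro Cons.IH) auto
    then obtain c' s where c': "c' \<in> set ws" "t - length (g c) \<le> s"
        "s + length (g c') \<le> t - length (g c) + L" "exocc (g c') (concat (map g ws)) s" by blast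
    have "exocc (g c') (concat (map g (c # ws))) (length (g c) + s)"
      using c'(4) unfolding exocc_def cc by (auto simp: nth_append)
    then show ?thesis using c' True
      by (intro bexI[of _ c'] exI[of _ "length (g c) + s"]) auto
  next
    case False
    show ?thesis
    proof (cases "t = 0")
      case True
      have "exocc (g c) (concat (map g (c # ws))) 0"
        unfolding exocc_def cc by (auto simp: nth_append)
      then show ?thesis using True Cons.prems
        by (intro bexI[of _ c] exI[of _ 0]) auto
    next
      case t0: False
      have lc: "length (g c) \<le> M" using Cons.prems by auto
      have "t + L \<le> length (g c) + length (concat (map g ws))" using Cons.prems(2) by simp
      then have "length (concat (map g ws)) > 0" using Cons.prems(3) False lc by linarith
      then obtain c' ws' where ws: "ws = c' # ws'"
        by (cases ws) auto
      have lc': "length (g c') \<le> M" using Cons.prems ws by auto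
      have "exocc (g c') (concat (map g (c # ws))) (length (g c))"
        unfolding exocc_def cc ws by (auto simp: nth_append)
      then show ?thesis using False lc lc' Cons.prems ws
        by (intro bexI[of _ c'] exI[of _ "length (g c)"]) auto
    qed
  qed
qed


lemma near_occ: "near e V w \<Longrightarrow> occ e w V 0"
  unfolding near_def occ_def by (auto simp: list_all2_conv_all_nth)

lemma list_all2_concat: "list_all2 (list_all2 P) xss yss \<Longrightarrow> list_all2 P (concat xss) (concat yss)"
  by (induction rule: list_all2_induct) (auto intro: list_all2_appendI)

lemma near_concat:
  assumes "list_all2 (\<lambda>x y. near e (g x) (h y)) xs ys"
  shows "near e (concat (map g xs)) (concat (map h ys))"
  unfolding near_def
  by (rule list_all2_concat) (use assms in \<open>auto simp: list_all2_map1 list_all2_map2 near_def\<close>)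

lemma exocc_concat:
  assumes "c \<in> set ws" shows "\<exists>s. exocc (g c) (concat (map g ws)) s"
proof -
  obtain xs ys where "ws = xs @ c # ys" using split_list[OF assms] by blast
  then have "concat (map g ws) = concat (map g xs) @ g c @ concat (map g ys)" by simp
  then have "exocc (g c) (concat (map g ws)) (length (concat (map g xs)))"
    unfolding exocc_def by (auto simp: nth_append)
  then show ?thesis by blast
qed

lemma length_concat_ge:
  assumes "\<forall>c\<in>set w. m \<le> length (g c)"
  shows "m * length w \<le> length (concat (map g w))"
  using assms by (induction w) auto

lemma len_le1_eq: "length xs \<le> 1 \<Longrightarrow> x \<in> set xs \<Longrightarrow> y \<in> set xs \<Longrightarrow> x = y"
  by (cases xs) auto

definition wcont :: "('a::metric_space \<Rightarrow> 'b::metric_space list) \<Rightarrow> 'a \<Rightarrow> bool" where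
  "wcont f a \<longleftrightarrow> (\<forall>e>0. \<forall>\<^sub>F b in nhds a. near e (f b) (f a))"

lemma wcont_concat:
  assumes f: "wcont f a" and g: "\<And>c. wcont g c"
  shows "wcont (\<lambda>b. concat (map g (f b))) a"
  unfolding wcont_def
proof (intro allI impI)
  fix e :: real assume e: "e > 0"
  have "\<forall>i\<in>{..<length (f a)}. \<exists>d>0. \<forall>c. dist c (f a ! i) < d \<longrightarrow> near e (g c) (g (f a ! i))"
    using g e unfolding wcont_def eventually_nhds_metric by blast
  then obtain d where d: "\<And>i. i < length (f a) \<Longrightarrow> d i > 0 \<and>
      (\<forall>c. dist c (f a ! i) < d i \<longrightarrow> near e (g c) (g (f a ! i)))"
    by (metis lessThan_iff)
  define D where "D = Min (insert 1 (d ` {..<length (f a)}))"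
  have D0: "D > 0" unfolding D_def using d by (auto)
  have Dle: "\<And>i. i < length (f a) \<Longrightarrow> D \<le> d i" unfolding D_def by (auto)
  have "\<forall>\<^sub>F b in nhds a. near D (f b) (f a)" using f D0 unfolding wcont_def by blast
  then show "\<forall>\<^sub>F b in nhds a. near e (concat (map g (f b))) (concat (map g (f a)))"
  proof (rule eventually_mono)
    fix b assume nb: "near D (f b) (f a)"
    have h: "length (f b) = length (f a)" "\<And>i. i<length (f b) \<Longrightarrow> dist (f b ! i) (f a ! i) < D"
      using nb unfolding near_def list_all2_conv_all_nth by auto
    have "list_all2 (\<lambda>x y. near e (g x) (g y)) (f b) (f a)"
    proof (rule list_all2_all_nthI)
      fix i assume i: "i < length (f b)"
      then have "dist (f b ! i) (f a ! i) < d i" using Dle[of i] h by force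
      then show "near e (g (f b ! i)) (g (f a ! i))" using d[of i] h i by auto
    qed (use h in auto)
    then show "near e (concat (map g (f b))) (concat (map g (f a)))" by (rule near_concat)
  qed
qed

locale gsub =
  fixes \<sigma> :: "'a::metric_space \<Rightarrow> 'a list"
  assumes alph: "alphabet_space (UNIV :: 'a set)"
    and gs: "gen_substitution \<sigma>"
    and prim: "primitive \<sigma>"
begin

lemma sigma_ne: "\<sigma> a \<noteq> []"
  using gs unfolding gen_substitution_def by auto

lemma compact_UNIV: "compact (UNIV :: 'a set)"
  using alph unfolding alphabet_space_def by auto

lemma subst_word_simps [simp]:
  "subst_word \<sigma> [] = []" "subst_word \<sigma> (u @ v) = subst_word \<sigma> u @ subst_word \<sigma> v"
  "subst_word \<sigma> (a # u) = \<sigma> a @ subst_word \<sigma> u"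
  unfolding subst_word_def by auto

lemma funpow_subst: "(subst_word \<sigma> ^^ j) w = concat (map (subst_iter \<sigma> j) w)"
proof (induction j arbitrary: w)
  case 0
  then show ?case by (induction w) (auto simp: subst_iter_def)
next
  case (Suc j)
  have "(subst_word \<sigma> ^^ Suc j) w = subst_word \<sigma> ((subst_word \<sigma> ^^ j) w)" by simp
  also have "\<dots> = subst_word \<sigma> (concat (map (subst_iter \<sigma> j) w))" using Suc by simp
  also have "\<dots> = concat (map (subst_iter \<sigma> (Suc j)) w)"
    by (induction w) (auto simp: subst_iter_def)
  finally show ?case .
qed

lemma subst_iter_add: "subst_iter \<sigma> (j + k) a = concat (map (subst_iter \<sigma> j) (subst_iter \<sigma> k a))"
  by (simp add: subst_iter_def funpow_add funpow_subst[symmetric])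

lemma subst_iter_0 [simp]: "subst_iter \<sigma> 0 a = [a]"
  by (simp add: subst_iter_def)

lemma subst_iter_1: "subst_iter \<sigma> (Suc 0) a = \<sigma> a"
  by (simp add: subst_iter_def subst_word_def)

lemma subst_iter_1': "subst_iter \<sigma> (Suc 0) = \<sigma>"
  by (rule ext) (simp add: subst_iter_1)

lemma subst_iter_Suc: "subst_iter \<sigma> (Suc k) a = concat (map \<sigma> (subst_iter \<sigma> k a))"
  using subst_iter_add[of 1 k a] by (simp add: subst_iter_1')

lemma subst_iter_ne: "subst_iter \<sigma> k a \<noteq> []"
  by (induction k arbitrary: a) (auto simp: subst_iter_Suc sigma_ne)

lemma subst_word_concat: "subst_word \<sigma> w = concat (map \<sigma> w)"
  by (simp add: subst_word_def)

lemma subst_word_iter: "subst_word \<sigma> (subst_iter \<sigma> j a) = subst_iter \<sigma> (Suc j) a"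
  by (simp add: subst_iter_Suc subst_word_def)

lemma len_iter_mono: "j \<le> k \<Longrightarrow> length (subst_iter \<sigma> j a) \<le> length (subst_iter \<sigma> k a)"
proof -
  assume "j \<le> k"
  then obtain d where k: "k = d + j" by (metis add.commute le_add_diff_inverse)
  have "1 * length (subst_iter \<sigma> j a) \<le> length (concat (map (subst_iter \<sigma> d) (subst_iter \<sigma> j a)))"
    by (rule length_concat_ge) (auto simp: subst_iter_ne Suc_le_eq)
  then show ?thesis by (simp add: k subst_iter_add)
qed

lemma wcont_sigma: "wcont \<sigma> a"
  unfolding wcont_def
proof (intro allI impI)
  fix e :: real assume e: "e > 0"
  have cl: "continuous_on UNIV (\<lambda>a. length (\<sigma> a))" using gs unfolding gen_substitution_def by auto
  have cl2: "\<forall>B. open B \<longrightarrow> open ((\<lambda>a. length (\<sigma> a)) -` B)"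
    using cl by (simp add: continuous_on_open_vimage[of UNIV])
  have "open ((\<lambda>a. length (\<sigma> a)) -` {length (\<sigma> a)} \<inter> UNIV)"
    using cl2 by (simp add: open_discrete)
  then have ev1: "\<forall>\<^sub>F b in nhds a. length (\<sigma> b) = length (\<sigma> a)"
    unfolding eventually_nhds by (intro exI[of _ "(\<lambda>a. length (\<sigma> a)) -` {length (\<sigma> a)}"]) auto
  have ev2: "\<forall>\<^sub>F b in nhds a. dist (\<sigma> b ! i) (\<sigma> a ! i) < e" if i: "i < length (\<sigma> a)" for i
  proof -
    have ci: "continuous_on {b. i < length (\<sigma> b)} (\<lambda>b. \<sigma> b ! i)"
      using gs unfolding gen_substitution_def by auto
    have op: "open {b. i < length (\<sigma> b)}"
      using cl2[rule_format, of "{i<..}"] by (simp add: open_discrete vimage_def)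
    have "isCont (\<lambda>b. \<sigma> b ! i) a"
      using ci op i continuous_on_eq_continuous_at by blast
    then have "((\<lambda>b. \<sigma> b ! i) \<longlongrightarrow> \<sigma> a ! i) (at a)" by (simp add: isCont_def)
    then have "\<forall>\<^sub>F b in at a. dist (\<sigma> b ! i) (\<sigma> a ! i) < e" using e tendstoD by blast
    then show ?thesis unfolding eventually_nhds_conv_at using e by simp
  qed
  have "\<forall>\<^sub>F b in nhds a. \<forall>i\<in>{..<length (\<sigma> a)}. dist (\<sigma> b ! i) (\<sigma> a ! i) < e"
    by (rule eventually_ball_finite) (use ev2 in auto)
  with ev1 show "\<forall>\<^sub>F b in nhds a. near e (\<sigma> b) (\<sigma> a)"
    by eventually_elim (auto simp: near_def list_all2_conv_all_nth)
qed

lemma wcont_iter: "wcont (subst_iter \<sigma> k) a"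
proof (induction k arbitrary: a)
  case 0
  show ?case unfolding wcont_def
    by (auto simp: near_def eventually_nhds_metric)
next
  case (Suc k)
  show ?case
    unfolding subst_iter_Suc by (rule wcont_concat[OF Suc wcont_sigma])
qed

lemma len_iter_ev: "\<forall>\<^sub>F b in nhds a. length (subst_iter \<sigma> k b) = length (subst_iter \<sigma> k a)"
proof -
  have "\<forall>\<^sub>F b in nhds a. near 1 (subst_iter \<sigma> k b) (subst_iter \<sigma> k a)"
    using wcont_iter unfolding wcont_def by auto
  then show ?thesis by eventually_elim (auto simp: near_def list_all2_lengthD)
qed

lemma len_iter_bound: "\<exists>B. \<forall>a. length (subst_iter \<sigma> k a) \<le> B"
proof -
  have "continuous_on UNIV (\<lambda>a. real (length (subst_iter \<sigma> k a)))"
  proof (subst continuous_on_eq_continuous_at, simp, intro ballI)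
    fix a :: 'a
    have ev: "\<forall>\<^sub>F b in nhds a. real (length (subst_iter \<sigma> k b)) = real (length (subst_iter \<sigma> k a))"
      using len_iter_ev by eventually_elim simp
    show "isCont (\<lambda>a. real (length (subst_iter \<sigma> k a))) a"
      using isCont_cong[OF ev] by simp
  qed
  then have "compact ((\<lambda>a. real (length (subst_iter \<sigma> k a))) ` UNIV)"
    using compact_continuous_image compact_UNIV by blast
  then obtain B where "\<forall>x\<in>(\<lambda>a. real (length (subst_iter \<sigma> k a))) ` UNIV. norm x \<le> B"
    using compact_imp_bounded bounded_iff by metis
  then have "\<forall>a. real (length (subst_iter \<sigma> k a)) \<le> B" by auto
  have "length (subst_iter \<sigma> k a) \<le> nat \<lceil>B\<rceil>" for a
  proof -
    have "\<lceil>real (length (subst_iter \<sigma> k a))\<rceil> \<le> \<lceil>B\<rceil>"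
      using \<open>\<forall>a. real (length (subst_iter \<sigma> k a)) \<le> B\<close> by (intro ceiling_mono) auto
    then show ?thesis by simp
  qed
  then show ?thesis by blast
qed

lemma prim_open: "open V \<Longrightarrow> V \<noteq> {} \<Longrightarrow> \<exists>j. \<forall>a k. j \<le> k \<longrightarrow> (\<exists>x\<in>set (subst_iter \<sigma> k a). x \<in> V)"
  using prim unfolding primitive_def by blast

lemma two_points: "\<exists>p q::'a. p \<noteq> q"
  using alph unfolding alphabet_space_def by auto

lemma len_ge2: "\<exists>j0. \<forall>a k. j0 \<le> k \<longrightarrow> 2 \<le> length (subst_iter \<sigma> k a)"
proof -
  obtain p q :: 'a where pq: "p \<noteq> q" using two_points by blast
  define d where "d = dist p q / 2"
  have d: "d > 0" using pq by (simp add: d_def)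
  obtain j1 where j1: "\<forall>a k. j1 \<le> k \<longrightarrow> (\<exists>x\<in>set (subst_iter \<sigma> k a). x \<in> ball p d)"
    using prim_open[of "ball p d"] d by auto
  obtain j2 where j2: "\<forall>a k. j2 \<le> k \<longrightarrow> (\<exists>x\<in>set (subst_iter \<sigma> k a). x \<in> ball q d)"
    using prim_open[of "ball q d"] d by auto
  have "2 \<le> length (subst_iter \<sigma> k a)" if "max j1 j2 \<le> k" for a k
  proof (rule ccontr)
    assume "\<not> 2 \<le> length (subst_iter \<sigma> k a)"
    then have l: "length (subst_iter \<sigma> k a) \<le> 1" by simp
    have jk: "j1 \<le> k" "j2 \<le> k" using that by auto
    obtain x where x: "x \<in> set (subst_iter \<sigma> k a)" "x \<in> ball p d" using j1 jk(1) by blast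
    obtain y where y: "y \<in> set (subst_iter \<sigma> k a)" "y \<in> ball q d" using j2 jk(2) by blast
    have xy: "x = y" using len_le1_eq[OF l x(1) y(1)] .
    have "dist p q \<le> dist p x + dist x q" by (rule dist_triangle)
    also have "\<dots> < d + d" using x(2) y(2) xy by (intro add_strict_mono) (auto simp: dist_commute)
    finally show False by (simp add: d_def)
  qed
  then show ?thesis by blast
qed

lemma len_grow: "\<exists>k. \<forall>a k'. k \<le> k' \<longrightarrow> N \<le> length (subst_iter \<sigma> k' a)"
proof -
  obtain j0 where j0: "\<forall>a k. j0 \<le> k \<longrightarrow> 2 \<le> length (subst_iter \<sigma> k a)" using len_ge2 by blast
  have pw: "2 ^ m \<le> length (subst_iter \<sigma> (m * j0) a)" for m a
  proof (induction m arbitrary: a)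
    case 0
    then show ?case by simp
  next
    case (Suc m)
    have "2 * length (subst_iter \<sigma> (m * j0) a) \<le>
          length (concat (map (subst_iter \<sigma> j0) (subst_iter \<sigma> (m * j0) a)))"
      by (rule length_concat_ge) (use j0 in auto)
    then have "2 * length (subst_iter \<sigma> (m * j0) a) \<le> length (subst_iter \<sigma> (Suc m * j0) a)"
      by (simp add: subst_iter_add[symmetric] add.commute)
    then show ?case using Suc[of a] by simp
  qed
  have "N \<le> length (subst_iter \<sigma> k' a)" if "N * j0 \<le> k'" for a k'
  proof -
    have "N < 2 ^ N" by (rule less_exp)
    also have "\<dots> \<le> length (subst_iter \<sigma> (N * j0) a)" by (rule pw)
    also have "\<dots> \<le> length (subst_iter \<sigma> k' a)" by (rule len_iter_mono[OF that])
    finally show ?thesis by simp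
  qed
  then show ?thesis by blast
qed

lemma lang_indep:
  assumes "w \<in> language_of \<sigma> b" shows "w \<in> language_of \<sigma> a"
  unfolding language_of_iff
proof (intro conjI allI impI)
  show "w \<noteq> []" using assms unfolding language_of_iff by auto
  fix e :: real assume e: "e > 0"
  obtain j t where o: "occ (e/2) w (subst_iter \<sigma> j b) t"
    using assms e unfolding language_of_iff by (meson half_gt_zero)
  obtain d where d: "d > 0" "\<forall>c. dist c b < d \<longrightarrow> near (e/2) (subst_iter \<sigma> j c) (subst_iter \<sigma> j b)"
    using wcont_iter[of j b] e unfolding wcont_def eventually_nhds_metric by (meson half_gt_zero)
  obtain K where K: "\<forall>a k. K \<le> k \<longrightarrow> (\<exists>x\<in>set (subst_iter \<sigma> k a). x \<in> ball b d)"
    using prim_open[of "ball b d"] d by auto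
  obtain c where c: "c \<in> set (subst_iter \<sigma> K a)" "dist b c < d" using K by auto
  obtain s where s: "exocc (subst_iter \<sigma> j c) (subst_iter \<sigma> (j + K) a) s"
    using exocc_concat[OF c(1), of "subst_iter \<sigma> j"] by (auto simp: subst_iter_add)
  have "occ (e/2) (subst_iter \<sigma> j b) (subst_iter \<sigma> j c) 0"
    using d c by (intro near_occ) (auto simp: dist_commute)
  then have "occ (e/2 + e/2) w (subst_iter \<sigma> j c) (0 + t)" by (rule occ_trans[OF o])
  then have "occ e w (subst_iter \<sigma> (j+K) a) (s + (0 + t))"
    by (intro occ_exocc_trans[OF _ s]) simp
  then show "\<exists>j t. occ e w (subst_iter \<sigma> j a) t" by blast
qed

lemma language_eq: "language \<sigma> = language_of \<sigma> a"
  unfolding language_def using lang_indep by blast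

end

lemma length_window [simp]: "length (window x m n) = nat (n - m + 1)"
  by (simp add: window_def)

lemma nth_window: "i < nat (n - m + 1) \<Longrightarrow> window x m n ! i = x (m + int i)"
  by (simp add: window_def nth_upto)

lemma window_ne: "m \<le> n \<Longrightarrow> window x m n \<noteq> []"
  by (simp add: window_def)

lemma window_shift: "window (shift x) m n = window x (m+1) (n+1)"
  by (rule nth_equalityI) (auto simp: nth_window shift_def algebra_simps)

lemma funpow_shift: "(shift ^^ m) x = (\<lambda>i. x (i + int m))"
  by (induction m arbitrary: x) (auto simp: shift_def algebra_simps)

lemma window_sub:
  assumes "m' \<le> m" "n \<le> n'" "m \<le> n"
  shows "exocc (window x m n) (window x m' n') (nat (m - m'))"
  unfolding exocc_def
proof (intro conjI allI impI)
  show "nat (m - m') + length (window x m n) \<le> length (window x m' n')"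
    using assms by simp
  fix i assume i: "i < length (window x m n)"
  have i2: "nat (m - m') + i < nat (n' - m' + 1)" using i assms by simp
  have "window x m' n' ! (nat (m - m') + i) = x (m' + int (nat (m - m') + i))"
    by (rule nth_window[OF i2])
  also have "\<dots> = x (m + int i)" using assms by simp
  also have "\<dots> = window x m n ! i" using i by (simp add: nth_window)
  finally show "window x m' n' ! (nat (m - m') + i) = window x m n ! i" .
qed

lemma isCont_coord: fixes l :: "int \<Rightarrow> 'b::metric_space" shows "isCont (\<lambda>x. x i) l"
proof -
  have "continuous_on UNIV (\<lambda>x::int\<Rightarrow>'b. x i)" by simp
  then show ?thesis by (metis continuous_on_eq_continuous_at open_UNIV UNIV_I)
qed

lemma tendsto_coord: fixes l :: "int \<Rightarrow> 'b::metric_space" shows  "(f \<longlongrightarrow> l) F \<Longrightarrow> ((\<lambda>n. f n i) \<longlongrightarrow> l i) F"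
  using isCont_tendsto_compose[OF isCont_coord[of l i]] by blast

lemma continuous_shift: "continuous_on UNIV shift"
  unfolding shift_def
  by (intro continuous_on_coordinatewise_then_product) simp

context gsub begin

lemma compact_fun: "compact (UNIV :: (int \<Rightarrow> 'a) set)"
proof -
  have "compact_space (euclidean :: 'a topology)"
    using compact_UNIV by (simp add: compact_space_def compactin_euclidean_iff)
  then have "compact_space (product_topology (\<lambda>i::int. (euclidean :: 'a topology)) UNIV)"
    by (simp add: compact_space_product_topology)
  then have "compact_space (euclidean :: (int \<Rightarrow> 'a) topology)"
    by (simp add: euclidean_product_topology)
  then show ?thesis by (simp add: compact_space_def compactin_euclidean_iff)
qed

lemma lang_sub: "w \<in> language_of \<sigma> a \<Longrightarrow> exocc v w t \<Longrightarrow> v \<noteq> [] \<Longrightarrow> v \<in> language_of \<sigma> a"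
  unfolding language_of_iff using exocc_occ_trans by blast

lemma lang_closed:
  assumes "w \<noteq> []" "\<And>e. e > 0 \<Longrightarrow> \<exists>v. v \<in> language_of \<sigma> a \<and> occ e w v 0"
  shows "w \<in> language_of \<sigma> a"
  unfolding language_of_iff
proof (intro conjI allI impI)
  show "w \<noteq> []" by fact
  fix e :: real assume e: "e > 0"
  obtain v where v: "v \<in> language_of \<sigma> a" "occ (e/2) w v 0" using assms(2)[of "e/2"] e by auto
  obtain j t where "occ (e/2) v (subst_iter \<sigma> j a) t" using v(1) e unfolding language_of_iff
    by (meson half_gt_zero)
  from occ_trans[OF v(2) this] show "\<exists>j t. occ e w (subst_iter \<sigma> j a) t" by auto
qed

lemma subshift_iff: "x \<in> subshift \<sigma> \<longleftrightarrow> (\<forall>n::nat. window x (- int n) (int n) \<in> language_of \<sigma> a)"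
  unfolding subshift_def language_eq[of a] by simp

lemma window_in:
  assumes "x \<in> subshift \<sigma>" "m \<le> n"
  shows "window x m n \<in> language_of \<sigma> a"
proof -
  define N where "N = nat (max \<bar>m\<bar> \<bar>n\<bar>)"
  have w: "window x (- int N) (int N) \<in> language_of \<sigma> a" using assms(1) subshift_iff by blast
  have ex: "exocc (window x m n) (window x (- int N) (int N)) (nat (m - - int N))"
  proof (rule window_sub)
    show "- int N \<le> m" "n \<le> int N" unfolding N_def by (simp_all add: max_def abs_if)
  qed (use assms(2) in simp)
  show ?thesis by (rule lang_sub[OF w ex window_ne[OF assms(2)]])
qed

lemma shift_in: assumes "x \<in> subshift \<sigma>" shows "shift x \<in> subshift \<sigma>"
  unfolding subshift_iff[of _ undefined] window_shift
  using window_in[OF assms] by simp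

definition unshift :: "(int \<Rightarrow> 'a) \<Rightarrow> (int \<Rightarrow> 'a)" where
  "unshift x = (\<lambda>i. x (i - 1))"

lemma window_unshift: "window (unshift x) m n = window x (m-1) (n-1)"
  by (rule nth_equalityI) (auto simp: nth_window unshift_def algebra_simps)

lemma unshift_in: assumes "x \<in> subshift \<sigma>" shows "unshift x \<in> subshift \<sigma>"
  unfolding subshift_iff[of _ undefined] window_unshift
  using window_in[OF assms] by simp

lemma shift_unshift [simp]: "shift (unshift x) = x" "unshift (shift x) = x"
  by (auto simp: shift_def unshift_def)

lemma funpow_shift_in: "x \<in> subshift \<sigma> \<Longrightarrow> (shift ^^ m) x \<in> subshift \<sigma>"
  by (induction m) (auto intro: shift_in)

lemma continuous_unshift: "continuous_on UNIV unshift"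
  unfolding unshift_def
  by (intro continuous_on_coordinatewise_then_product) simp

lemma closed_subshift: "closed (subshift \<sigma>)"
  unfolding closed_sequential_limits
proof (intro allI impI)
  fix x :: "nat \<Rightarrow> int \<Rightarrow> 'a" and l assume h: "(\<forall>k. x k \<in> subshift \<sigma>) \<and> x \<longlonglongrightarrow> l"
  show "l \<in> subshift \<sigma>"
    unfolding subshift_iff[of _ undefined]
  proof
    fix n :: nat
    show "window l (- int n) (int n) \<in> language_of \<sigma> undefined"
    proof (rule lang_closed)
      show "window l (- int n) (int n) \<noteq> []" by (simp add: window_ne)
      fix e :: real assume e: "e > 0"
      have "\<forall>i\<in>{- int n..int n}. \<forall>\<^sub>F k in sequentially. dist (x k i) (l i) < e"
        using h e tendsto_coord[of x l sequentially] by (auto simp: tendsto_iff)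
      then have "\<forall>\<^sub>F k in sequentially. \<forall>i\<in>{- int n..int n}. dist (x k i) (l i) < e"
        by (intro eventually_ball_finite) auto
      then obtain k where k: "\<forall>i\<in>{- int n..int n}. dist (x k i) (l i) < e"
        unfolding eventually_sequentially by blast
      have "window (x k) (- int n) (int n) \<in> language_of \<sigma> undefined"
        using h subshift_iff by blast
      moreover have "occ e (window l (- int n) (int n)) (window (x k) (- int n) (int n)) 0"
        unfolding occ_def using k by (auto simp: nth_window)
      ultimately show "\<exists>v. v \<in> language_of \<sigma> undefined \<and> occ e (window l (- int n) (int n)) v 0"
        by blast
    qed
  qed
qed

lemma compact_subshift: "compact (subshift \<sigma>)"
  using closed_subshift compact_fun compact_Int_closed[of UNIV "subshift \<sigma>"] by simp

lemma subshift_nonempty: "subshift \<sigma> \<noteq> {}"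
proof -
  define a0 :: 'a where "a0 = undefined"
  have "\<forall>k. \<exists>K. \<forall>a. 2*k+1 \<le> length (subst_iter \<sigma> K a)"
    using len_grow by blast
  then obtain K where K: "\<And>k a. 2*k+1 \<le> length (subst_iter \<sigma> (K k) a)" by metis
  define z where "z k = (\<lambda>i::int. if - int k \<le> i \<and> i \<le> int k then subst_iter \<sigma> (K k) a0 ! nat (i + int k) else a0)" for k
  obtain l r where r: "strict_mono r" "(z \<circ> r) \<longlonglongrightarrow> l"
    using compact_imp_seq_compact[OF compact_fun] unfolding seq_compact_def by blast
  have "l \<in> subshift \<sigma>"
    unfolding subshift_iff[of _ a0]
  proof
    fix n :: nat
    show "window l (- int n) (int n) \<in> language_of \<sigma> a0"
    proof (rule lang_closed)
      show "window l (- int n) (int n) \<noteq> []" by (simp add: window_ne)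
      fix e :: real assume e: "e > 0"
      have "\<forall>i\<in>{- int n..int n}. \<forall>\<^sub>F k in sequentially. dist ((z \<circ> r) k i) (l i) < e"
        using r e tendsto_coord[of "z \<circ> r" l sequentially] by (auto simp: tendsto_iff)
      then have "\<forall>\<^sub>F k in sequentially. \<forall>i\<in>{- int n..int n}. dist ((z \<circ> r) k i) (l i) < e"
        by (intro eventually_ball_finite) auto
      moreover have "\<forall>\<^sub>F k in sequentially. n \<le> k" by (rule eventually_ge_at_top)
      ultimately have "\<forall>\<^sub>F k in sequentially. n \<le> k \<and> (\<forall>i\<in>{- int n..int n}. dist ((z \<circ> r) k i) (l i) < e)"
        by eventually_elim auto
      then obtain k where k: "n \<le> k" "\<forall>i\<in>{- int n..int n}. dist (z (r k) i) (l i) < e"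
        unfolding eventually_sequentially comp_apply by blast
      have rk: "k \<le> r k" using r(1) by (simp add: strict_mono_imp_increasing)
      let ?v = "window (z (r k)) (- int n) (int n)"
      have ex: "exocc ?v (subst_iter \<sigma> (K (r k)) a0) (r k - n)"
        unfolding exocc_def
      proof (intro conjI allI impI)
        show "r k - n + length ?v \<le> length (subst_iter \<sigma> (K (r k)) a0)"
          using K[of "r k" a0] k rk by simp
        fix i assume i: "i < length ?v"
        then have i2: "i \<le> 2 * n" by simp
        have "?v ! i = z (r k) (- int n + int i)" using i by (simp add: nth_window)
        also have "\<dots> = subst_iter \<sigma> (K (r k)) a0 ! nat (- int n + int i + int (r k))"
          unfolding z_def using i2 k(1) rk by auto
        also have "nat (- int n + int i + int (r k)) = r k - n + i" using k(1) rk by simp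
        finally show "subst_iter \<sigma> (K (r k)) a0 ! (r k - n + i) = ?v ! i" by simp
      qed
      have "?v \<in> language_of \<sigma> a0"
        unfolding language_of_iff using exocc_occ[OF ex] by (auto simp: window_ne)
      moreover have "occ e (window l (- int n) (int n)) ?v 0"
        unfolding occ_def using k by (auto simp: nth_window)
      ultimately show "\<exists>v. v \<in> language_of \<sigma> a0 \<and> occ e (window l (- int n) (int n)) v 0"
        by blast
    qed
  qed
  then show ?thesis by blast
qed

end

lemma cyl_nbhd:
  fixes U :: "(int \<Rightarrow> 'a::metric_space) set"
  assumes "open U" "x \<in> U"
  shows "\<exists>n::nat. \<exists>e>0. \<forall>f. (\<forall>i. - int n \<le> i \<and> i \<le> int n \<longrightarrow> dist (f i) (x i) < e) \<longrightarrow> f \<in> U"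
proof -
  obtain r where r: "r > 0" "ball x r \<subseteq> U" using openE[OF assms] by blast
  obtain N where N: "(1/2::real)^N < r/2" using real_arch_pow_inv[of "r/2" "1/2"] r by auto
  define n where "n = Max ((\<lambda>k. nat \<bar>from_nat k :: int\<bar>) ` {..N})"
  have nk: "\<bar>from_nat k :: int\<bar> \<le> int n" if "k \<le> N" for k
  proof -
    have "nat \<bar>from_nat k :: int\<bar> \<le> n" unfolding n_def using that by (intro Max_ge) auto
    then show ?thesis by simp
  qed
  have "f \<in> U" if f: "\<forall>i. - int n \<le> i \<and> i \<le> int n \<longrightarrow> dist (f i) (x i) < r/4" for f
  proof -
    have fin: "finite {dist (x (from_nat k)) (f (from_nat k)) |k. k \<le> N}" by simp
    have "Max {dist (x (from_nat k)) (f (from_nat k)) |k. k \<le> N} < r/4"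
    proof (subst Max_less_iff[OF fin])
      show "{dist (x (from_nat k)) (f (from_nat k)) |k. k \<le> N} \<noteq> {}" by auto
      show "\<forall>a\<in>{dist (x (from_nat k)) (f (from_nat k)) |k. k \<le> N}. a < r / 4"
      proof safe
        fix k assume "k \<le> N"
        then have "- int n \<le> from_nat k" "from_nat k \<le> int n" using nk[of k] by auto
        then show "dist (x (from_nat k)) (f (from_nat k)) < r/4" using f by (simp add: dist_commute)
      qed
    qed
    then have "dist x f < r" using dist_fun_le_dist_first_terms[of x f N] N by linarith
    then show ?thesis using r by auto
  qed
  then show ?thesis using r by (intro exI[of _ n] exI[of _ "r/4"]) auto
qed

lemma occ_back:
  assumes "occ e1 v V T" "occ e2 w V q" "T \<le> q" "q + length w \<le> T + length v"
  shows "occ (e1+e2) w v (q - T)"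
  unfolding occ_def
proof (intro conjI allI impI)
  show "q - T + length w \<le> length v" using assms by simp
  fix i assume i: "i < length w"
  have "dist (v ! (q - T + i)) (w ! i) \<le> dist (v ! (q - T + i)) (V ! (T + (q - T + i))) + dist (V ! (q + i)) (w ! i)"
    using assms(3) by (metis dist_triangle add.assoc le_add_diff_inverse)
  also have "\<dots> < e1 + e2"
  proof (rule add_strict_mono)
    have "q - T + i < length v" using assms i by simp
    then show "dist (v ! (q - T + i)) (V ! (T + (q - T + i))) < e1"
      using assms(1) unfolding occ_def by (simp add: dist_commute)
    show "dist (V ! (q + i)) (w ! i) < e2" using assms(2) i unfolding occ_def by simp
  qed
  finally show "dist (v ! (q - T + i)) (w ! i) < e1 + e2" .
qed

context gsub begin

lemma prim_occ:
  assumes "w \<in> language_of \<sigma> a" "e > 0"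
  shows "\<exists>P. \<forall>c. \<exists>s. occ e w (subst_iter \<sigma> P c) s"
proof -
  obtain j t where o: "occ (e/2) w (subst_iter \<sigma> j a) t"
    using assms unfolding language_of_iff by (meson half_gt_zero)
  obtain d where d: "d > 0" "\<forall>c. dist c a < d \<longrightarrow> near (e/2) (subst_iter \<sigma> j c) (subst_iter \<sigma> j a)"
    using wcont_iter[of j a] assms(2) unfolding wcont_def eventually_nhds_metric by (meson half_gt_zero)
  obtain j1 where j1: "\<forall>a' k. j1 \<le> k \<longrightarrow> (\<exists>x\<in>set (subst_iter \<sigma> k a'). x \<in> ball a d)"
    using prim_open[of "ball a d"] d by auto
  have "\<exists>s. occ e w (subst_iter \<sigma> (j + j1) c) s" for c
  proof -
    obtain c' where c': "c' \<in> set (subst_iter \<sigma> j1 c)" "dist a c' < d" using j1 by auto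
    obtain s where s: "exocc (subst_iter \<sigma> j c') (subst_iter \<sigma> (j + j1) c) s"
      using exocc_concat[OF c'(1), of "subst_iter \<sigma> j"] by (auto simp: subst_iter_add)
    have "occ (e/2) (subst_iter \<sigma> j a) (subst_iter \<sigma> j c') 0"
      using d c' by (intro near_occ) (auto simp: dist_commute)
    then have "occ (e/2 + e/2) w (subst_iter \<sigma> j c') (0 + t)" by (rule occ_trans[OF o])
    then have "occ e w (subst_iter \<sigma> (j+j1) c) (s + (0 + t))"
      by (intro occ_exocc_trans[OF _ s]) simp
    then show ?thesis by blast
  qed
  then show ?thesis by blast
qed

lemma orbit_dense:
  assumes x: "x \<in> subshift \<sigma>" and y: "y \<in> subshift \<sigma>" and U: "open U" "x \<in> U"
  shows "\<exists>m. (shift ^^ m) y \<in> U"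
proof -
  define a :: 'a where "a = undefined"
  obtain n e where ne: "e > 0" "\<forall>f. (\<forall>i. - int n \<le> i \<and> i \<le> int n \<longrightarrow> dist (f i) (x i) < e) \<longrightarrow> f \<in> U"
    using cyl_nbhd[OF U] by blast
  define w where "w = window x (- int n) (int n)"
  have wL: "w \<in> language_of \<sigma> a" unfolding w_def using x by (intro window_in) auto
  obtain P where P: "\<forall>c. \<exists>s. occ (e/2) w (subst_iter \<sigma> P c) s"
    using prim_occ[OF wL] ne(1) by (meson half_gt_zero)
  obtain M0 where M0: "\<forall>c. length (subst_iter \<sigma> P c) \<le> M0" using len_iter_bound by blast
  define M where "M = max M0 1"
  have M: "\<And>c. length (subst_iter \<sigma> P c) \<le> M" "M \<ge> 1" using M0 unfolding M_def by (auto simp: le_max_iff_disj)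
  define v where "v = window y 0 (int (2*M))"
  have lv: "length v = 2*M + 1" unfolding v_def by simp
  have vL: "v \<in> language_of \<sigma> a" unfolding v_def using y by (intro window_in) auto
  obtain J T where JT: "occ (e/2) v (subst_iter \<sigma> J a) T"
    using vL ne(1) unfolding language_of_iff by (meson half_gt_zero)
  have JP: "P \<le> J"
  proof (rule ccontr)
    assume "\<not> P \<le> J"
    then have "length (subst_iter \<sigma> J a) \<le> M" using len_iter_mono[of J P a] M(1)[of a] by simp
    moreover have "T + length v \<le> length (subst_iter \<sigma> J a)" using JT unfolding occ_def by simp
    ultimately show False using lv by simp
  qed
  have cc: "subst_iter \<sigma> J a = concat (map (subst_iter \<sigma> P) (subst_iter \<sigma> (J - P) a))"
    using subst_iter_add[of P "J - P" a] JP by simp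
  obtain c s where cs: "c \<in> set (subst_iter \<sigma> (J - P) a)" "T \<le> s"
    "s + length (subst_iter \<sigma> P c) \<le> T + (2*M+1)" "exocc (subst_iter \<sigma> P c) (subst_iter \<sigma> J a) s"
  proof -
    have "\<exists>c\<in>set (subst_iter \<sigma> (J - P) a). \<exists>s. T \<le> s \<and> s + length (subst_iter \<sigma> P c) \<le> T + (2*M+1) \<and>
       exocc (subst_iter \<sigma> P c) (concat (map (subst_iter \<sigma> P) (subst_iter \<sigma> (J - P) a))) s"
    proof (rule block_lemma)
      show "\<forall>c\<in>set (subst_iter \<sigma> (J - P) a). length (subst_iter \<sigma> P c) \<le> M" using M by auto
      show "T + (2 * M + 1) \<le> length (concat (map (subst_iter \<sigma> P) (subst_iter \<sigma> (J - P) a)))"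
        using JT lv unfolding occ_def cc[symmetric] by simp
    qed auto
    then show ?thesis using that cc by auto
  qed
  obtain s' where s': "occ (e/2) w (subst_iter \<sigma> P c) s'" using P by blast
  have o2: "occ (e/2) w (subst_iter \<sigma> J a) (s + s')" by (rule occ_exocc_trans[OF s' cs(4)])
  have "s' + length w \<le> length (subst_iter \<sigma> P c)" using s' unfolding occ_def by simp
  then have o3: "occ (e/2 + e/2) w v (s + s' - T)"
    using cs(2,3) lv by (intro occ_back[OF JT o2]) auto
  define p where "p = s + s' - T"
  have lw: "length w = 2 * n + 1" unfolding w_def by simp
  have "(shift ^^ (p + n)) y \<in> U"
  proof (rule mp[OF spec[OF ne(2)]], intro allI impI)
    fix i :: int assume i: "- int n \<le> i \<and> i \<le> int n"
    define k where "k = nat (i + int n)"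
    have k: "k < length w" "i = - int n + int k" using i lw unfolding k_def by auto
    have pk: "p + k < length v" using o3 k(1) unfolding occ_def p_def by simp
    have "dist (v ! (p + k)) (w ! k) < e" using o3 k(1) unfolding occ_def p_def by simp
    moreover have "v ! (p + k) = y (int (p + k))" using pk lv unfolding v_def by (simp add: nth_window)
    moreover have "w ! k = x i" using k lw unfolding w_def by (simp add: nth_window)
    moreover have "(shift ^^ (p + n)) y i = y (int (p + k))" using k(2) by (simp add: funpow_shift add.commute)
    ultimately show "dist ((shift ^^ (p + n)) y i) (x i) < e" by simp
  qed
  then show ?thesis by blast
qed

lemma minimal: "minimal_system (subshift \<sigma>) shift"
  unfolding minimal_system_def
proof (intro conjI allI impI)
  show "subshift \<sigma> \<noteq> {}" by (rule subshift_nonempty)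
  fix Y assume Y: "Y \<subseteq> subshift \<sigma> \<and> closedin (top_of_set (subshift \<sigma>)) Y \<and> Y \<noteq> {} \<and> shift ` Y \<subseteq> Y"
  obtain F where F: "closed F" "Y = subshift \<sigma> \<inter> F" using Y closedin_closed by metis
  obtain y where y: "y \<in> Y" using Y by blast
  have orb: "(shift ^^ m) y \<in> Y" for m by (induction m) (use Y y in auto)
  show "Y = subshift \<sigma>"
  proof (rule ccontr)
    assume "Y \<noteq> subshift \<sigma>"
    then obtain x where x: "x \<in> subshift \<sigma>" "x \<notin> F" using F by auto
    obtain m where "(shift ^^ m) y \<in> - F"
      using orbit_dense[OF x(1) _ _, of y "- F"] F(1) x(2) y Y by (auto simp: open_Compl)
    then show False using orb[of m] F by auto
  qed
qed

lemma no_isolated: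
  assumes ap: "aperiodic \<sigma>" and x: "x \<in> subshift \<sigma>"
  shows "x islimpt subshift \<sigma>"
  unfolding islimpt_def
proof (intro allI impI)
  fix U assume U: "x \<in> U" "open U"
  obtain m where m: "(shift ^^ m) (shift x) \<in> U"
    using orbit_dense[OF x shift_in[OF x] U(2) U(1)] by blast
  have e: "(shift ^^ m) (shift x) = (shift ^^ Suc m) x" by (simp only: funpow_Suc_right comp_apply)
  have "(shift ^^ Suc m) x \<noteq> x" using ap x unfolding aperiodic_def by blast
  moreover have "(shift ^^ Suc m) x \<in> subshift \<sigma>" by (rule funpow_shift_in[OF x])
  ultimately show "\<exists>y\<in>subshift \<sigma>. y \<in> U \<and> y \<noteq> x" using m e by metis
qed

end

context gsub begin

lemma zero_dim: "zero_dimensional_space (UNIV :: 'a set)"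
  using alph unfolding alphabet_space_def by auto

lemma tot_disc: "totally_disconnected_set (subshift \<sigma>)"
  unfolding totally_disconnected_set_def
proof (intro allI impI ballI)
  fix C f g assume C: "C \<subseteq> subshift \<sigma> \<and> connected C" and f: "f \<in> C" and g: "g \<in> C"
  show "f = g"
  proof (rule ccontr)
    assume "f \<noteq> g"
    then obtain i where i: "f i \<noteq> g i" by auto
    define S where "S = (\<lambda>h. h i) ` C"
    have cS: "connected S" unfolding S_def
      by (rule connected_continuous_image[OF _ conjunct2[OF C]])
         (rule continuous_on_subset[OF continuous_on_product_coordinates], simp)
    define r where "r = dist (f i) (g i)"
    have r: "r > 0" using i unfolding r_def by simp
    obtain V where V: "open V" "closed V" "f i \<in> V" "V \<subseteq> ball (f i) r"
      using zero_dim unfolding zero_dimensional_space_def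
      by (metis centre_in_ball closedin_closed_Int openin_open_Int open_ball r
          Int_UNIV_left Int_UNIV_right closed_closedin open_openin subtopology_UNIV)
    have gV: "g i \<notin> V" using V(4) unfolding r_def by auto
    have "openin (top_of_set S) (S \<inter> V)" using V(1) by (auto intro: openin_open_Int)
    moreover have "closedin (top_of_set S) (S \<inter> V)" using V(2) by (auto intro: closedin_closed_Int)
    ultimately have "S \<inter> V = {} \<or> S \<inter> V = S" using cS connected_clopen by blast
    moreover have "f i \<in> S \<inter> V" using f V(3) unfolding S_def by auto
    moreover have "g i \<in> S - V" using g gV unfolding S_def by auto
    ultimately show False by auto
  qed
qed

lemma shift_homeo: "homeomorphism (subshift \<sigma>) (subshift \<sigma>) shift unshift"
  unfolding homeomorphism_def
proof (intro conjI ballI)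
  show "shift ` subshift \<sigma> = subshift \<sigma>"
  proof
    show "shift ` subshift \<sigma> \<subseteq> subshift \<sigma>" using shift_in by auto
    show "subshift \<sigma> \<subseteq> shift ` subshift \<sigma>"
    proof
      fix y assume "y \<in> subshift \<sigma>"
      then show "y \<in> shift ` subshift \<sigma>" using unshift_in by (metis image_eqI shift_unshift(1))
    qed
  qed
  show "unshift ` subshift \<sigma> = subshift \<sigma>"
  proof
    show "unshift ` subshift \<sigma> \<subseteq> subshift \<sigma>" using unshift_in by auto
    show "subshift \<sigma> \<subseteq> unshift ` subshift \<sigma>"
    proof
      fix y assume "y \<in> subshift \<sigma>"
      then show "y \<in> unshift ` subshift \<sigma>" using shift_in by (metis image_eqI shift_unshift(2))
    qed
  qed
  show "continuous_on (subshift \<sigma>) shift" using continuous_shift continuous_on_subset by blast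
  show "continuous_on (subshift \<sigma>) unshift" using continuous_unshift continuous_on_subset by blast
qed auto

lemma min_cantor:
  assumes "aperiodic \<sigma>"
  shows "minimal_cantor_system (subshift \<sigma>) shift"
  unfolding minimal_cantor_system_def cantor_set_def
  using subshift_nonempty compact_subshift tot_disc no_isolated[OF assms] shift_homeo minimal
  by blast

end

section \<open>Increasing integer sequences\<close>

lemma incr_mono:
  fixes p :: "int \<Rightarrow> int"
  assumes inc: "\<And>k. p k < p (k+1)" and "k < k'"
  shows "p k < p k'"
proof -
  define d where "d = nat (k' - k - 1)"
  have d: "k' = k + 1 + int d" using assms(2) unfolding d_def by simp
  have "p k < p (k + 1 + int d)" for d
  proof (induction d)
    case 0
    then show ?case using inc[of k] by simp
  next
    case (Suc d)
    have eq: "k + 1 + int (Suc d) = k + 1 + int d + 1" by simp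
    show ?case unfolding eq using Suc.IH inc[of "k+1+int d"] by (rule less_trans)
  qed
  then show ?thesis using d by simp
qed

lemma incr_mono_le:
  fixes p :: "int \<Rightarrow> int"
  assumes inc: "\<And>k. p k < p (k+1)" and "k \<le> k'"
  shows "p k \<le> p k'"
  using incr_mono[of p, OF inc, of k k'] assms(2) by (cases "k = k'") auto

lemma incr_ge:
  fixes p :: "int \<Rightarrow> int"
  assumes inc: "\<And>k. p k < p (k+1)"
  shows "0 \<le> k \<Longrightarrow> p 0 + k \<le> p k" and "k \<le> 0 \<Longrightarrow> p k \<le> p 0 + k"
proof -
  show "0 \<le> k \<Longrightarrow> p 0 + k \<le> p k"
  proof (induction k rule: int_ge_induct)
    case (step i)
    then show ?case using inc[of i] by linarith
  qed simp
  show "k \<le> 0 \<Longrightarrow> p k \<le> p 0 + k"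
  proof -
    assume k: "k \<le> 0"
    have "p (- int n) \<le> p 0 - int n" for n
    proof (induction n)
      case (Suc n)
      have "p (- int (Suc n)) < p (- int (Suc n) + 1)" by (rule inc)
      moreover have "- int (Suc n) + 1 = - int n" by simp
      ultimately show ?case using Suc by simp
    qed simp
    from this[of "nat (- k)"] k show ?thesis by simp
  qed
qed

lemma incr_block_ex:
  fixes p :: "int \<Rightarrow> int"
  assumes inc: "\<And>k. p k < p (k+1)"
  shows "\<exists>k. p k \<le> n \<and> n < p (k+1)"
proof -
  have main: "\<forall>n. p (- int N) \<le> n \<and> n < p (int N) \<longrightarrow> (\<exists>k. p k \<le> n \<and> n < p (k+1))" for N
  proof (induction N)
    case 0
    then show ?case by simp
  next
    case (Suc N)
    show ?case
    proof (intro allI impI)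
      fix n assume n: "p (- int (Suc N)) \<le> n \<and> n < p (int (Suc N))"
      show "\<exists>k. p k \<le> n \<and> n < p (k+1)"
      proof (cases "n < p (- int N)")
        case True
        then show ?thesis using n by (intro exI[of _ "- int (Suc N)"]) auto
      next
        case False
        show ?thesis
        proof (cases "p (int N) \<le> n")
          case True
          then show ?thesis using n by (intro exI[of _ "int N"]) (auto simp: add.commute)
        next
          case False2: False
          then show ?thesis using Suc False by auto
        qed
      qed
    qed
  qed
  define N where "N = nat \<bar>n - p 0\<bar> + 1"
  have "p (- int N) \<le> p 0 + (- int N)" using incr_ge(2)[of p, OF inc, of "- int N"] by simp
  moreover have "p 0 + int N \<le> p (int N)" using incr_ge(1)[of p, OF inc, of "int N"] by simp
  ultimately have "p (- int N) \<le> n \<and> n < p (int N)" unfolding N_def by auto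
  then show ?thesis using main by blast
qed

lemma incr_block_uniq:
  fixes p :: "int \<Rightarrow> int"
  assumes inc: "\<And>k. p k < p (k+1)"
    and "p k \<le> n" "n < p (k+1)" "p k' \<le> n" "n < p (k'+1)"
  shows "k = k'"
proof (rule ccontr)
  assume "k \<noteq> k'"
  then consider "k + 1 \<le> k'" | "k' + 1 \<le> k" by linarith
  then show False
  proof cases
    case 1
    then have "p (k+1) \<le> p k'" by (rule incr_mono_le[of p, OF inc])
    then show False using assms by simp
  next
    case 2
    then have "p (k'+1) \<le> p k" by (rule incr_mono_le[of p, OF inc])
    then show False using assms by simp
  qed
qed

section \<open>Cuttings\<close>

definition cut :: "('a \<Rightarrow> 'a list) \<Rightarrow> (int \<Rightarrow> 'a) \<Rightarrow> (int \<Rightarrow> int) \<Rightarrow> (int \<Rightarrow> 'a) \<Rightarrow> bool" where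
  "cut \<sigma> z p x \<longleftrightarrow> (\<forall>k. \<sigma> (x k) = window z (p k) (p (k + 1) - 1))"

lemma window_translate: "window (\<lambda>i. z (i + d)) (a - d) (b - d) = window z a b"
  by (rule nth_equalityI) (auto simp: nth_window algebra_simps)

lemma cut_translate: "cut \<sigma> z p x \<Longrightarrow> cut \<sigma> (\<lambda>i. z (i + d)) (\<lambda>k. p k - d) x"
  unfolding cut_def
proof
  fix k assume "\<forall>k. \<sigma> (x k) = window z (p k) (p (k + 1) - 1)"
  then have "\<sigma> (x k) = window z (p k) (p (k + 1) - 1)" by blast
  also have "\<dots> = window (\<lambda>i. z (i + d)) (p k - d) (p (k + 1) - 1 - d)"
    by (rule window_translate[symmetric])
  finally show "\<sigma> (x k) = window (\<lambda>i. z (i + d)) (p k - d) (p (k + 1) - d - 1)"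
    by (simp add: algebra_simps)
qed

lemma cut_shiftx: "cut \<sigma> z p x \<Longrightarrow> cut \<sigma> z (\<lambda>k. p (k+1)) (shift x)"
  unfolding cut_def shift_def by simp

locale nesub =
  fixes \<sigma> :: "'a \<Rightarrow> 'a list"
  assumes ne: "\<And>a. \<sigma> a \<noteq> []"
begin

lemma cut_step:
  assumes "cut \<sigma> z p x" shows "p (k+1) = p k + int (length (\<sigma> (x k)))"
proof -
  have "length (\<sigma> (x k)) = nat (p (k+1) - 1 - p k + 1)"
    using assms unfolding cut_def by (metis length_window)
  moreover have "length (\<sigma> (x k)) > 0" using ne by simp
  ultimately show ?thesis by linarith
qed

lemma cut_inc: "cut \<sigma> z p x \<Longrightarrow> p k < p (k+1)"
  using cut_step[of z p x k] ne[of "x k"] by simp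

lemma cut_nth: "cut \<sigma> z p x \<Longrightarrow> i < length (\<sigma> (x k)) \<Longrightarrow> z (p k + int i) = \<sigma> (x k) ! i"
  unfolding cut_def by (metis length_window nth_window)

lemma cut_z_unique:
  assumes "cut \<sigma> z p x" "cut \<sigma> z' p x" shows "z = z'"
proof
  fix n
  obtain k where k: "p k \<le> n" "n < p (k+1)" using incr_block_ex[of p n] cut_inc[OF assms(1)] by blast
  define i where "i = nat (n - p k)"
  have n: "n = p k + int i" using k unfolding i_def by simp
  have i: "i < length (\<sigma> (x k))" using k cut_step[OF assms(1), of k] unfolding i_def by simp
  show "z n = z' n" unfolding n using cut_nth[OF assms(1) i] cut_nth[OF assms(2) i] by simp
qed

lemma subst_pos_0: "subst_pos \<sigma> x 0 = 0"
  by (simp add: subst_pos_def)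

lemma subst_pos_step: "subst_pos \<sigma> x (k+1) = subst_pos \<sigma> x k + int (length (\<sigma> (x k)))"
proof (cases "0 \<le> k")
  case True
  have "{0..<k+1} = insert k {0..<k}" using True by auto
  then show ?thesis using True by (simp add: subst_pos_def)
next
  case False
  have s: "{k..<0} = insert k {k+1..<0}" using False by auto
  have "subst_pos \<sigma> x (k+1) = - int (\<Sum>i\<in>{k+1..<0}. length (\<sigma> (x i)))"
    using False by (cases "k + 1 = 0") (auto simp: subst_pos_def)
  moreover have "subst_pos \<sigma> x k = - int (length (\<sigma> (x k))) - int (\<Sum>i\<in>{k+1..<0}. length (\<sigma> (x i)))"
    using False by (simp add: subst_pos_def s)
  ultimately show ?thesis by simp
qed

lemma pos_inc: "subst_pos \<sigma> x k < subst_pos \<sigma> x (k+1)"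
  using subst_pos_step[of x k] ne[of "x k"] by simp

lemma pos_char:
  assumes "p 0 = 0" "\<And>k. p (k+1) = p k + int (length (\<sigma> (x k)))"
  shows "p = subst_pos \<sigma> x"
proof
  fix k
  show "p k = subst_pos \<sigma> x k"
  proof (induction k rule: int_induct[where k=0])
    case base
    then show ?case using assms(1) subst_pos_0 by simp
  next
    case (step1 i)
    then show ?case using assms(2)[of i] subst_pos_step[of x i] by simp
  next
    case (step2 i)
    then show ?case using assms(2)[of "i - 1"] subst_pos_step[of x "i - 1"] by simp
  qed
qed

lemma cut_pos: "cut \<sigma> z p x \<Longrightarrow> p 0 = 0 \<Longrightarrow> p = subst_pos \<sigma> x"
  by (rule pos_char) (auto intro: cut_step)

lemma subst_seq_val:
  assumes "subst_pos \<sigma> x k \<le> n" "n < subst_pos \<sigma> x (k+1)"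
  shows "subst_seq \<sigma> x n = \<sigma> (x k) ! nat (n - subst_pos \<sigma> x k)"
proof -
  have "(THE k. subst_pos \<sigma> x k \<le> n \<and> n < subst_pos \<sigma> x (k + 1)) = k"
    using assms incr_block_uniq[of "subst_pos \<sigma> x", OF pos_inc] by blast
  then show ?thesis unfolding subst_seq_def Let_def by simp
qed

lemma cut_subst_seq: "cut \<sigma> (subst_seq \<sigma> x) (subst_pos \<sigma> x) x"
  unfolding cut_def
proof
  fix k
  show "\<sigma> (x k) = window (subst_seq \<sigma> x) (subst_pos \<sigma> x k) (subst_pos \<sigma> x (k + 1) - 1)"
  proof (rule nth_equalityI)
    show "length (\<sigma> (x k)) = length (window (subst_seq \<sigma> x) (subst_pos \<sigma> x k) (subst_pos \<sigma> x (k + 1) - 1))"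
      using subst_pos_step[of x k] by simp
    fix i assume i: "i < length (\<sigma> (x k))"
    have "window (subst_seq \<sigma> x) (subst_pos \<sigma> x k) (subst_pos \<sigma> x (k + 1) - 1) ! i
        = subst_seq \<sigma> x (subst_pos \<sigma> x k + int i)"
      using i subst_pos_step[of x k] by (simp add: nth_window)
    also have "\<dots> = \<sigma> (x k) ! i"
      using i subst_pos_step[of x k] by (subst subst_seq_val[of _ k]) auto
    finally show "\<sigma> (x k) ! i = window (subst_seq \<sigma> x) (subst_pos \<sigma> x k) (subst_pos \<sigma> x (k + 1) - 1) ! i"
      by simp
  qed
qed

lemma cut_char: "cut \<sigma> z p x \<Longrightarrow> p 0 = 0 \<Longrightarrow> z = subst_seq \<sigma> x \<and> p = subst_pos \<sigma> x"
  using cut_pos cut_z_unique cut_subst_seq by metis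

lemma window_append:
  assumes "m \<le> j" "j \<le> n + 1"
  shows "window z m n = window z m (j - 1) @ window z j n"
proof (cases "j = n + 1")
  case True
  then show ?thesis by (simp add: window_def)
next
  case False
  then show ?thesis using assms by (simp add: window_def upto_split1)
qed

lemma cut_concat:
  assumes c: "cut \<sigma> z p x" and ab: "a \<le> b"
  shows "window z (p a) (p (b+1) - 1) = concat (map (\<sigma> \<circ> x) [a..b])"
  using ab
proof (induction b rule: int_ge_induct)
  case base
  then show ?case using c unfolding cut_def by simp
next
  case (step i)
  have m: "p a \<le> p (i+1)" using incr_mono_le[of p, OF cut_inc[OF c]] step(1) by simp
  have "p (i+1) < p (i+1+1)" by (rule cut_inc[OF c])
  then have "p (i+1) \<le> p (i+1+1) - 1 + 1" by simp
  then have "window z (p a) (p (i+1+1) - 1) = window z (p a) (p (i+1) - 1) @ window z (p (i+1)) (p (i+1+1) - 1)"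
    using m by (intro window_append) auto
  also have "\<dots> = concat (map (\<sigma> \<circ> x) [a..i]) @ \<sigma> (x (i+1))"
  proof -
    have blk: "window z (p (i+1)) (p (i+1+1) - 1) = \<sigma> (x (i+1))" using c unfolding cut_def by simp
    show ?thesis by (simp only: step.IH blk)
  qed
  also have "\<dots> = concat (map (\<sigma> \<circ> x) [a..i+1])"
    using step(1) upto_rec2[of a "i+1"] by simp
  finally show ?case .
qed

lemma subst_seq_shift:
  "(shift ^^ length (\<sigma> (x 0))) (subst_seq \<sigma> x) = subst_seq \<sigma> (shift x)"
proof -
  define L where "L = length (\<sigma> (x 0))"
  have c: "cut \<sigma> (subst_seq \<sigma> x) (\<lambda>k. subst_pos \<sigma> x (k+1)) (shift x)"
    by (rule cut_shiftx[OF cut_subst_seq])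
  have c2: "cut \<sigma> (\<lambda>i. subst_seq \<sigma> x (i + int L)) (\<lambda>k. subst_pos \<sigma> x (k+1) - int L) (shift x)"
    by (rule cut_translate[OF c])
  have "subst_pos \<sigma> x (0+1) - int L = 0"
    using subst_pos_step[of x 0] subst_pos_0[of x] unfolding L_def by simp
  then have "(\<lambda>i. subst_seq \<sigma> x (i + int L)) = subst_seq \<sigma> (shift x)"
    using cut_char[OF c2] by simp
  then show ?thesis unfolding L_def by (simp add: funpow_shift)
qed

end


sublocale gsub \<subseteq> nesub \<sigma>
  by unfold_locales (rule sigma_ne)

lemma ev_coord:
  fixes x0 :: "int \<Rightarrow> 'b::metric_space"
  assumes "eventually P (nhds (x0 k))"
  shows "eventually (\<lambda>x. P (x k)) (nhds x0)"
proof -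
  have "((\<lambda>x. x k) \<longlongrightarrow> x0 k) (at x0)" using isCont_coord[of x0 k] by (simp add: isCont_def)
  then have "eventually (\<lambda>x. P (x k)) (at x0)"
    using assms unfolding eventually_nhds_conv_at filterlim_iff by blast
  then show ?thesis using assms unfolding eventually_nhds_conv_at by auto
qed

context gsub begin

lemma near_letters:
  assumes "e > 0"
  shows "\<exists>D>0. \<forall>u. list_all2 (\<lambda>x y. dist x y < D) u w \<longrightarrow> list_all2 (\<lambda>x y. near e (\<sigma> x) (\<sigma> y)) u w"
proof -
  have "\<forall>i\<in>{..<length w}. \<exists>d>0. \<forall>c. dist c (w ! i) < d \<longrightarrow> near e (\<sigma> c) (\<sigma> (w ! i))"
    using wcont_sigma assms unfolding wcont_def eventually_nhds_metric by blast
  then obtain d where d: "\<And>i. i < length w \<Longrightarrow> d i > 0 \<and>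
      (\<forall>c. dist c (w ! i) < d i \<longrightarrow> near e (\<sigma> c) (\<sigma> (w ! i)))"
    by (metis lessThan_iff)
  define D where "D = Min (insert 1 (d ` {..<length w}))"
  have D0: "D > 0" unfolding D_def using d by auto
  have Dle: "\<And>i. i < length w \<Longrightarrow> D \<le> d i" unfolding D_def by auto
  have "list_all2 (\<lambda>x y. near e (\<sigma> x) (\<sigma> y)) u w" if u: "list_all2 (\<lambda>x y. dist x y < D) u w" for u
  proof -
    have h: "length u = length w" "\<And>i. i<length u \<Longrightarrow> dist (u ! i) (w ! i) < D"
      using u unfolding list_all2_conv_all_nth by auto
    show ?thesis
    proof (rule list_all2_all_nthI)
      fix i assume i: "i < length u"
      then have "dist (u ! i) (w ! i) < d i" using Dle[of i] h by force
      then show "near e (\<sigma> (u ! i)) (\<sigma> (w ! i))" using d[of i] h i by auto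
    qed (use h in auto)
  qed
  then show ?thesis using D0 by blast
qed

lemma sublist_subst: "sublist u V \<Longrightarrow> sublist (subst_word \<sigma> u) (subst_word \<sigma> V)"
  unfolding sublist_def by (metis subst_word_simps(2))

lemma lang_subst:
  assumes w: "w \<in> language_of \<sigma> a"
  shows "subst_word \<sigma> w \<in> language_of \<sigma> a"
  unfolding language_of_iff
proof (intro conjI allI impI)
  have "w \<noteq> []" using w unfolding language_of_iff by auto
  then show "subst_word \<sigma> w \<noteq> []" by (cases w) (auto simp: sigma_ne)
  fix e :: real assume e: "e > 0"
  obtain D where D: "D > 0" "\<forall>u. list_all2 (\<lambda>x y. dist x y < D) u w \<longrightarrow> list_all2 (\<lambda>x y. near e (\<sigma> x) (\<sigma> y)) u w"
    using near_letters[OF e] by blast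
  obtain j t where o: "occ D w (subst_iter \<sigma> j a) t" using w D(1) unfolding language_of_iff by blast
  define u where "u = take (length w) (drop t (subst_iter \<sigma> j a))"
  have "list_all2 (\<lambda>x y. dist x y < D) u w" unfolding u_def by (rule occ_take_drop(1)[OF o])
  then have "near e (concat (map \<sigma> u)) (concat (map \<sigma> w))" using D(2) near_concat by blast
  then have o1: "occ e (subst_word \<sigma> w) (subst_word \<sigma> u) 0" by (simp add: near_occ subst_word_concat)
  have "sublist u (subst_iter \<sigma> j a)" unfolding u_def by (rule exocc_sublist[OF occ_take_drop(2)[OF o]])
  then have "sublist (subst_word \<sigma> u) (subst_iter \<sigma> (Suc j) a)"
    using sublist_subst subst_word_iter by metis
  then obtain s where "exocc (subst_word \<sigma> u) (subst_iter \<sigma> (Suc j) a) s" using sublist_exocc by blast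
  from occ_exocc_trans[OF o1 this] show "\<exists>j t. occ e (subst_word \<sigma> w) (subst_iter \<sigma> j a) t" by blast
qed

lemma subst_seq_in:
  assumes x: "x \<in> subshift \<sigma>" shows "subst_seq \<sigma> x \<in> subshift \<sigma>"
  unfolding subshift_iff[of _ undefined]
proof
  fix n :: nat
  define z where "z = subst_seq \<sigma> x"
  define p where "p = subst_pos \<sigma> x"
  define K where "K = int n + 1"
  have c: "cut \<sigma> z p x" unfolding z_def p_def by (rule cut_subst_seq)
  have inc: "\<And>k. p k < p (k+1)" unfolding p_def by (rule pos_inc)
  have p0: "p 0 = 0" unfolding p_def by (rule subst_pos_0)
  have bw: "window z (p (- K)) (p (K+1) - 1) = concat (map (\<sigma> \<circ> x) [- K..K])"
    by (rule cut_concat[OF c]) (simp add: K_def)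
  also have "\<dots> = subst_word \<sigma> (window x (- K) K)"
    by (simp add: subst_word_concat window_def)
  finally have bw: "window z (p (- K)) (p (K+1) - 1) = subst_word \<sigma> (window x (- K) K)" .
  have "window x (- K) K \<in> language_of \<sigma> undefined" using x by (intro window_in) (auto simp: K_def)
  then have L: "window z (p (- K)) (p (K+1) - 1) \<in> language_of \<sigma> undefined"
    unfolding bw by (rule lang_subst)
  have a1: "p (- K) \<le> - int n" using incr_ge(2)[of p, OF inc, of "- K"] p0 by (simp add: K_def)
  have a2: "int n \<le> p (K+1) - 1" using incr_ge(1)[of p, OF inc, of "K+1"] p0 by (simp add: K_def)
  have ex: "exocc (window z (- int n) (int n)) (window z (p (- K)) (p (K+1) - 1)) (nat (- int n - p (- K)))"
    by (rule window_sub) (use a1 a2 in auto)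
  show "window z (- int n) (int n) \<in> language_of \<sigma> undefined"
    by (rule lang_sub[OF L ex window_ne]) simp
qed

lemma pos_local:
  assumes "\<forall>k. - B \<le> k \<and> k \<le> B \<longrightarrow> length (\<sigma> (x k)) = length (\<sigma> (y k))"
    and "- B \<le> k" "k \<le> B + 1"
  shows "subst_pos \<sigma> x k = subst_pos \<sigma> y k"
  unfolding subst_pos_def
proof (cases "0 \<le> k")
  case True
  have "(\<Sum>i\<in>{0..<k}. length (\<sigma> (x i))) = (\<Sum>i\<in>{0..<k}. length (\<sigma> (y i)))"
    using assms True by (intro sum.cong) auto
  then show "(if 0 \<le> k then int (\<Sum>i\<in>{0..<k}. length (\<sigma> (x i))) else - int (\<Sum>i\<in>{k..<0}. length (\<sigma> (x i)))) =
    (if 0 \<le> k then int (\<Sum>i\<in>{0..<k}. length (\<sigma> (y i))) else - int (\<Sum>i\<in>{k..<0}. length (\<sigma> (y i))))"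
    using True by simp
next
  case False
  have "(\<Sum>i\<in>{k..<0}. length (\<sigma> (x i))) = (\<Sum>i\<in>{k..<0}. length (\<sigma> (y i)))"
    using assms False by (intro sum.cong) auto
  then show "(if 0 \<le> k then int (\<Sum>i\<in>{0..<k}. length (\<sigma> (x i))) else - int (\<Sum>i\<in>{k..<0}. length (\<sigma> (x i)))) =
    (if 0 \<le> k then int (\<Sum>i\<in>{0..<k}. length (\<sigma> (y i))) else - int (\<Sum>i\<in>{k..<0}. length (\<sigma> (y i))))"
    using False by simp
qed

lemma isCont_subst_seq_coord: "isCont (\<lambda>x. subst_seq \<sigma> x n) x0"
proof -
  define p0 where "p0 = subst_pos \<sigma> x0"
  have inc: "\<And>k. p0 k < p0 (k+1)" unfolding p0_def by (rule pos_inc)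
  have p00: "p0 0 = 0" unfolding p0_def by (rule subst_pos_0)
  obtain k0 where k0: "p0 k0 \<le> n" "n < p0 (k0+1)" using incr_block_ex[of p0 n, OF inc] by blast
  define B where "B = \<bar>n\<bar> + 1"
  have kB: "- B \<le> k0" "k0 \<le> B"
  proof -
    show "k0 \<le> B"
    proof (cases "0 \<le> k0")
      case True
      then show ?thesis using incr_ge(1)[of p0, OF inc, of k0] p00 k0 unfolding B_def by simp
    qed (simp add: B_def)
    show "- B \<le> k0"
    proof (cases "k0 + 1 \<le> 0")
      case True
      then show ?thesis using incr_ge(2)[of p0, OF inc, of "k0+1"] p00 k0 unfolding B_def by simp
    qed (simp add: B_def)
  qed
  define i0 where "i0 = nat (n - p0 k0)"
  have val0: "subst_seq \<sigma> x0 n = \<sigma> (x0 k0) ! i0"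
    unfolding i0_def p0_def by (rule subst_seq_val) (use k0 p0_def in auto)
  have evE: "\<forall>\<^sub>F x in nhds x0. \<forall>k\<in>{-B..B}. length (\<sigma> (x k)) = length (\<sigma> (x0 k))"
  proof (rule eventually_ball_finite, simp, intro ballI)
    fix k
    have "\<forall>\<^sub>F b in nhds (x0 k). near 1 (\<sigma> b) (\<sigma> (x0 k))" using wcont_sigma unfolding wcont_def by simp
    then have "\<forall>\<^sub>F b in nhds (x0 k). length (\<sigma> b) = length (\<sigma> (x0 k))"
      by eventually_elim (auto simp: near_def list_all2_lengthD)
    then show "\<forall>\<^sub>F x in nhds x0. length (\<sigma> (x k)) = length (\<sigma> (x0 k))" by (rule ev_coord)
  qed
  show ?thesis
    unfolding isCont_def tendsto_iff
  proof (intro allI impI)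
    fix e :: real assume e: "e > 0"
    have "\<forall>\<^sub>F b in nhds (x0 k0). near e (\<sigma> b) (\<sigma> (x0 k0))" using wcont_sigma e unfolding wcont_def by simp
    then have "\<forall>\<^sub>F b in nhds (x0 k0). length (\<sigma> b) = length (\<sigma> (x0 k0)) \<and> dist (\<sigma> b ! i0) (\<sigma> (x0 k0) ! i0) < e"
    proof eventually_elim
      case (elim b)
      have "i0 < length (\<sigma> (x0 k0))" using k0 subst_pos_step[of x0 k0] unfolding i0_def p0_def by simp
      then show ?case using elim by (auto simp: near_def list_all2_conv_all_nth)
    qed
    then have evF: "\<forall>\<^sub>F x in nhds x0. length (\<sigma> (x k0)) = length (\<sigma> (x0 k0)) \<and> dist (\<sigma> (x k0) ! i0) (\<sigma> (x0 k0) ! i0) < e"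
      by (rule ev_coord)
    have "\<forall>\<^sub>F x in nhds x0. dist (subst_seq \<sigma> x n) (subst_seq \<sigma> x0 n) < e"
      using evE evF
    proof eventually_elim
      case (elim x)
      have ll: "\<forall>k. - B \<le> k \<and> k \<le> B \<longrightarrow> length (\<sigma> (x k)) = length (\<sigma> (x0 k))" using elim(1) by auto
      have q1: "subst_pos \<sigma> x k0 = p0 k0" unfolding p0_def using kB by (intro pos_local[OF ll]) auto
      have q2: "subst_pos \<sigma> x (k0+1) = p0 (k0+1)" unfolding p0_def using kB by (intro pos_local[OF ll]) auto
      have "subst_seq \<sigma> x n = \<sigma> (x k0) ! nat (n - subst_pos \<sigma> x k0)"
        by (rule subst_seq_val) (use k0 q1 q2 in auto)
      then have "subst_seq \<sigma> x n = \<sigma> (x k0) ! i0" using q1 unfolding i0_def by simp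
      then show ?case using elim(2) val0 by simp
    qed
    then show "\<forall>\<^sub>F x in at x0. dist (subst_seq \<sigma> x n) (subst_seq \<sigma> x0 n) < e"
      unfolding eventually_nhds_conv_at by simp
  qed
qed

lemma continuous_subst_seq: "continuous_on UNIV (subst_seq \<sigma>)"
  by (intro continuous_on_coordinatewise_then_product continuous_at_imp_continuous_on ballI isCont_subst_seq_coord)

end

context gsub begin

lemma rec_uniq:
  assumes rec: "recognizable \<sigma>" and z: "z \<in> subshift \<sigma>"
    and x: "x \<in> subshift \<sigma>" and x': "x' \<in> subshift \<sigma>"
    and c: "cut \<sigma> z n x" "n 0 \<le> 0" "0 < n 1"
    and c': "cut \<sigma> z n' x'" "n' 0 \<le> 0" "0 < n' 1"
  shows "range n = range n' \<and> x = x'"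
proof -
  define Q where "Q = (\<lambda>(C, x). x \<in> subshift \<sigma> \<and> (\<exists>n. C = range n \<and> n 0 \<le> 0 \<and> 0 < n 1 \<and>
           (\<forall>k. \<sigma> (x k) = window z (n k) (n (k + 1) - 1))))"
  have "\<exists>!p. Q p" unfolding Q_def by (rule bspec[OF rec[unfolded recognizable_def] z])
  then obtain p0 where "Q p0" "\<forall>q. Q q \<longrightarrow> q = p0" by (rule ex1E) blast
  then have p0: "\<And>q. Q q \<Longrightarrow> q = p0" by blast
  have "Q (range n, x)" unfolding Q_def using x c unfolding cut_def by (simp, intro exI[of _ n]) simp
  moreover have "Q (range n', x')" unfolding Q_def using x' c' unfolding cut_def by (simp, intro exI[of _ n']) simp
  ultimately have "(range n, x) = (range n', x')" using p0[of "(range n, x)"] p0[of "(range n', x')"] by simp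
  then show ?thesis by simp
qed

lemma rec_exists:
  assumes rec: "recognizable \<sigma>" and z: "z \<in> subshift \<sigma>"
  shows "\<exists>x n. x \<in> subshift \<sigma> \<and> n 0 \<le> 0 \<and> 0 < n 1 \<and> cut \<sigma> z n x"
proof -
  have "\<exists>!(C, x). x \<in> subshift \<sigma> \<and> (\<exists>n. C = range n \<and> n 0 \<le> 0 \<and> 0 < n 1 \<and>
           (\<forall>k. \<sigma> (x k) = window z (n k) (n (k + 1) - 1)))"
    by (rule bspec[OF rec[unfolded recognizable_def] z])
  then obtain p where "case p of (C, x) \<Rightarrow> x \<in> subshift \<sigma> \<and> (\<exists>n. C = range n \<and> n 0 \<le> 0 \<and> 0 < n 1 \<and>
           (\<forall>k. \<sigma> (x k) = window z (n k) (n (k + 1) - 1)))" by (rule ex1E)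
  then show ?thesis unfolding cut_def by (cases p) blast
qed

lemma pos1: "0 < subst_pos \<sigma> x 1"
  using pos_inc[of x 0] subst_pos_0[of x] by simp

lemma pos1_len: "subst_pos \<sigma> x 1 = int (length (\<sigma> (x 0)))"
  using subst_pos_step[of x 0] subst_pos_0[of x] by simp

lemma inj_subst: assumes rec: "recognizable \<sigma>" shows "inj_on (subst_seq \<sigma>) (subshift \<sigma>)"
proof
  fix x y assume x: "x \<in> subshift \<sigma>" and y: "y \<in> subshift \<sigma>" and e: "subst_seq \<sigma> x = subst_seq \<sigma> y"
  have z: "subst_seq \<sigma> x \<in> subshift \<sigma>" by (rule subst_seq_in[OF x])
  have cx: "cut \<sigma> (subst_seq \<sigma> x) (subst_pos \<sigma> x) x" by (rule cut_subst_seq)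
  have cy: "cut \<sigma> (subst_seq \<sigma> x) (subst_pos \<sigma> y) y" unfolding e by (rule cut_subst_seq)
  show "x = y" using rec_uniq[OF rec z x y cx _ pos1 cy _ pos1] by (simp add: subst_pos_0)
qed

lemma nonreturn:
  assumes rec: "recognizable \<sigma>" and x: "x \<in> subshift \<sigma>"
    and m: "0 < m" "m < length (\<sigma> (x 0))"
  shows "(shift ^^ m) (subst_seq \<sigma> x) \<notin> subst_seq \<sigma> ` subshift \<sigma>"
proof
  assume "(shift ^^ m) (subst_seq \<sigma> x) \<in> subst_seq \<sigma> ` subshift \<sigma>"
  then obtain y where y: "y \<in> subshift \<sigma>" "(shift ^^ m) (subst_seq \<sigma> x) = subst_seq \<sigma> y" by blast
  define z where "z = (shift ^^ m) (subst_seq \<sigma> x)"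
  have z: "z \<in> subshift \<sigma>" unfolding z_def by (intro funpow_shift_in subst_seq_in x)
  have cy: "cut \<sigma> z (subst_pos \<sigma> y) y" unfolding z_def y(2) by (rule cut_subst_seq)
  have cx: "cut \<sigma> z (\<lambda>k. subst_pos \<sigma> x k - int m) x"
    unfolding z_def funpow_shift by (rule cut_translate[OF cut_subst_seq])
  have "range (\<lambda>k. subst_pos \<sigma> x k - int m) = range (subst_pos \<sigma> y)"
  proof -
    have "range (\<lambda>k. subst_pos \<sigma> x k - int m) = range (subst_pos \<sigma> y) \<and> x = y"
      by (rule rec_uniq[OF rec z x y(1) cx _ _ cy _ pos1]) (use m pos1_len[of x] in \<open>simp_all add: subst_pos_0\<close>)
    then show ?thesis by (rule conjunct1)
  qed
  moreover have "0 \<in> range (subst_pos \<sigma> y)" using subst_pos_0[of y] rangeI[of "subst_pos \<sigma> y" 0] by simp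
  ultimately have "0 \<in> range (\<lambda>k. subst_pos \<sigma> x k - int m)" by simp
  then obtain k where "0 = subst_pos \<sigma> x k - int m" by blast
  then have k: "subst_pos \<sigma> x k = int m" by simp
  show False
  proof (cases "k \<le> 0")
    case True
    then have "subst_pos \<sigma> x k \<le> subst_pos \<sigma> x 0" by (intro incr_mono_le[of "subst_pos \<sigma> x", OF pos_inc])
    then show False using k m subst_pos_0[of x] by simp
  next
    case False
    then have "subst_pos \<sigma> x 1 \<le> subst_pos \<sigma> x k" by (intro incr_mono_le[of "subst_pos \<sigma> x", OF pos_inc]) simp
    then show False using k m pos1_len[of x] by simp
  qed
qed

lemma desub:
  assumes rec: "recognizable \<sigma>" and z: "z \<in> subshift \<sigma>"
  shows "\<exists>x\<in>subshift \<sigma>. \<exists>m. m < length (\<sigma> (x 0)) \<and> z = (shift ^^ m) (subst_seq \<sigma> x)"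
proof -
  obtain x n where xn: "x \<in> subshift \<sigma>" "n 0 \<le> 0" "0 < n 1" "cut \<sigma> z n x"
    using rec_exists[OF rec z] by blast
  have c2: "cut \<sigma> (\<lambda>i. z (i + n 0)) (\<lambda>k. n k - n 0) x" by (rule cut_translate[OF xn(4)])
  then have e: "(\<lambda>i. z (i + n 0)) = subst_seq \<sigma> x" using cut_char[OF c2] by simp
  define m where "m = nat (- n 0)"
  have "n 1 = n 0 + int (length (\<sigma> (x 0)))" using cut_step[OF xn(4), of 0] by simp
  then have ml: "m < length (\<sigma> (x 0))" unfolding m_def using xn by simp
  have "z = (shift ^^ m) (subst_seq \<sigma> x)"
  proof
    fix i
    have "(shift ^^ m) (subst_seq \<sigma> x) i = subst_seq \<sigma> x (i + int m)" by (simp add: funpow_shift)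
    also have "\<dots> = z (i + int m + n 0)" by (simp add: e[symmetric])
    also have "i + int m + n 0 = i" unfolding m_def using xn(2) by simp
    finally show "z i = (shift ^^ m) (subst_seq \<sigma> x) i" by simp
  qed
  then show ?thesis using xn(1) ml by blast
qed

lemma open_len: "open {b. length (\<sigma> b) \<in> N}"
proof -
  have cl: "continuous_on UNIV (\<lambda>a. length (\<sigma> a))" using gs unfolding gen_substitution_def by auto
  have "\<forall>B. open B \<longrightarrow> open ((\<lambda>a. length (\<sigma> a)) -` B)"
    using cl by (simp add: continuous_on_open_vimage[of UNIV])
  then have "open ((\<lambda>a. length (\<sigma> a)) -` N)" by (simp add: open_discrete)
  then show ?thesis by (simp add: vimage_def)
qed

lemma length_concat_one: "(\<forall>c. length (g c) = 1) \<Longrightarrow> length (concat (map g w)) = length w"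
  by (induction w) auto

lemma exists_long: "\<exists>x\<in>subshift \<sigma>. 2 \<le> length (\<sigma> (x 0))"
proof (rule ccontr)
  assume "\<not> (\<exists>x\<in>subshift \<sigma>. 2 \<le> length (\<sigma> (x 0)))"
  then have H: "\<And>x. x \<in> subshift \<sigma> \<Longrightarrow> length (\<sigma> (x 0)) < 2" by auto
  have H': "length (\<sigma> (x (int i))) < 2" if x: "x \<in> subshift \<sigma>" for x i
    using H[OF funpow_shift_in[OF x, of i]] by (simp add: funpow_shift)
  define V where "V = {b. length (\<sigma> b) \<in> {2..}}"
  have Vo: "open V" unfolding V_def by (rule open_len)
  have Vne: "V \<noteq> {}"
  proof
    assume "V = {}"
    have one: "\<forall>c. length (\<sigma> c) = 1"
    proof
      fix c
      have "length (\<sigma> c) \<notin> {2..}" using \<open>V = {}\<close> unfolding V_def by blast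
      then have "length (\<sigma> c) < 2" by simp
      moreover have "length (\<sigma> c) > 0" using sigma_ne[of c] by simp
      ultimately show "length (\<sigma> c) = 1" by linarith
    qed
    have "length (subst_iter \<sigma> k a) = 1" for k a
      by (induction k) (auto simp: subst_iter_Suc length_concat_one[OF one])
    moreover obtain j0 where "\<forall>a k. j0 \<le> k \<longrightarrow> 2 \<le> length (subst_iter \<sigma> k a)" using len_ge2 by blast
    ultimately show False by (metis le_refl One_nat_def Suc_1 not_less_eq_eq le_zero_eq)
  qed
  obtain P where P: "\<forall>a k. P \<le> k \<longrightarrow> (\<exists>y\<in>set (subst_iter \<sigma> k a). y \<in> V)"
    using prim_open[OF Vo Vne] by blast
  obtain M0 where M0: "\<forall>c. length (subst_iter \<sigma> P c) \<le> M0" using len_iter_bound by blast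
  define M where "M = max M0 1"
  have M: "\<And>c. length (subst_iter \<sigma> P c) \<le> M" using M0 unfolding M_def by (auto simp: le_max_iff_disj)
  obtain x where x: "x \<in> subshift \<sigma>" using subshift_nonempty by blast
  define a :: 'a where "a = undefined"
  define w where "w = window x 0 (int (2*M))"
  have lw: "length w = 2*M + 1" unfolding w_def by simp
  have wL: "w \<in> language_of \<sigma> a" unfolding w_def using x by (intro window_in) auto
  obtain D where D: "D > 0" "\<forall>u. list_all2 (\<lambda>x y. dist x y < D) u w \<longrightarrow> list_all2 (\<lambda>x y. near 1 (\<sigma> x) (\<sigma> y)) u w"
    using near_letters[of 1 w] by auto
  obtain J T where JT: "occ D w (subst_iter \<sigma> J a) T" using wL D(1) unfolding language_of_iff by blast
  have JP: "P \<le> J"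
  proof (rule ccontr)
    assume "\<not> P \<le> J"
    then have "length (subst_iter \<sigma> J a) \<le> M" using len_iter_mono[of J P a] M[of a] by simp
    moreover have "T + length w \<le> length (subst_iter \<sigma> J a)" using JT unfolding occ_def by simp
    ultimately show False using lw by simp
  qed
  have cc: "subst_iter \<sigma> J a = concat (map (subst_iter \<sigma> P) (subst_iter \<sigma> (J - P) a))"
    using subst_iter_add[of P "J - P" a] JP by simp
  obtain c s where cs: "c \<in> set (subst_iter \<sigma> (J - P) a)" "T \<le> s"
    "s + length (subst_iter \<sigma> P c) \<le> T + (2*M+1)" "exocc (subst_iter \<sigma> P c) (subst_iter \<sigma> J a) s"
  proof -
    have "\<exists>c\<in>set (subst_iter \<sigma> (J - P) a). \<exists>s. T \<le> s \<and> s + length (subst_iter \<sigma> P c) \<le> T + (2*M+1) \<and>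
       exocc (subst_iter \<sigma> P c) (concat (map (subst_iter \<sigma> P) (subst_iter \<sigma> (J - P) a))) s"
    proof (rule block_lemma)
      show "\<forall>c\<in>set (subst_iter \<sigma> (J - P) a). length (subst_iter \<sigma> P c) \<le> M" using M by auto
      show "T + (2 * M + 1) \<le> length (concat (map (subst_iter \<sigma> P) (subst_iter \<sigma> (J - P) a)))"
        using JT lw unfolding occ_def cc[symmetric] by simp
    qed auto
    then show ?thesis using that cc by auto
  qed
  obtain y where y: "y \<in> set (subst_iter \<sigma> P c)" "y \<in> V" using P by blast
  obtain q where q: "q < length (subst_iter \<sigma> P c)" "subst_iter \<sigma> P c ! q = y"
    using y(1) by (metis in_set_conv_nth)
  have yJ: "subst_iter \<sigma> J a ! (s + q) = y" using cs(4) q unfolding exocc_def by auto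
  define r where "r = s + q - T"
  have r: "r < length w" "T + r = s + q" using cs(2,3) q lw unfolding r_def by auto
  define u where "u = take (length w) (drop T (subst_iter \<sigma> J a))"
  have u: "list_all2 (\<lambda>x y. dist x y < D) u w" unfolding u_def by (rule occ_take_drop(1)[OF JT])
  have "list_all2 (\<lambda>x y. near 1 (\<sigma> x) (\<sigma> y)) u w" using D(2) u by blast
  then have "near 1 (\<sigma> (u ! r)) (\<sigma> (w ! r))" using r(1) by (rule list_all2_nthD2)
  then have "length (\<sigma> (u ! r)) = length (\<sigma> (w ! r))" unfolding near_def by (rule list_all2_lengthD)
  moreover have "u ! r = y"
  proof -
    have "r < length u" using u r(1) by (simp add: list_all2_lengthD)
    moreover have "T \<le> length (subst_iter \<sigma> J a)" using JT unfolding occ_def by simp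
    ultimately have "u ! r = subst_iter \<sigma> J a ! (T + r)" unfolding u_def by (simp add: nth_drop)
    then show ?thesis using r(2) yJ by simp
  qed
  moreover have "w ! r = x (int r)" using r(1) lw unfolding w_def by (simp add: nth_window)
  ultimately have "length (\<sigma> y) < 2" using H'[OF x, of r] by simp
  then show False using y(2) unfolding V_def by simp
qed

end

context gsub begin

lemma homeo_subst:
  assumes rec: "recognizable \<sigma>"
  shows "\<exists>g. homeomorphism (subshift \<sigma>) (subst_seq \<sigma> ` subshift \<sigma>) (subst_seq \<sigma>) g"
  by (rule homeomorphism_compact[OF compact_subshift continuous_on_subset[OF continuous_subst_seq] refl inj_subst[OF rec]]) simp

lemma induced_subst:
  assumes rec: "recognizable \<sigma>" and x: "x \<in> subshift \<sigma>"
  shows "induced_map shift (subst_seq \<sigma> ` subshift \<sigma>) (subst_seq \<sigma> x) = subst_seq \<sigma> (shift x)"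
proof -
  define L where "L = length (\<sigma> (x 0))"
  have L0: "L > 0" unfolding L_def using sigma_ne by simp
  have sh: "(shift ^^ L) (subst_seq \<sigma> x) = subst_seq \<sigma> (shift x)" unfolding L_def by (rule subst_seq_shift)
  have "return_time shift (subst_seq \<sigma> ` subshift \<sigma>) (subst_seq \<sigma> x) = L"
    unfolding return_time_def
  proof (rule Least_equality)
    show "0 < L \<and> (shift ^^ L) (subst_seq \<sigma> x) \<in> subst_seq \<sigma> ` subshift \<sigma>"
      using L0 sh shift_in[OF x] by auto
    fix y assume y: "0 < y \<and> (shift ^^ y) (subst_seq \<sigma> x) \<in> subst_seq \<sigma> ` subshift \<sigma>"
    show "L \<le> y"
    proof (rule ccontr)
      assume "\<not> L \<le> y"
      then have "y < length (\<sigma> (x 0))" unfolding L_def by simp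
      then show False using nonreturn[OF rec x, of y] y by simp
    qed
  qed
  then show ?thesis unfolding induced_map_def using sh by simp
qed

lemma conj_main:
  assumes rec: "recognizable \<sigma>"
  shows "conjugacy (subst_seq \<sigma>) (subshift \<sigma>) shift (subst_seq \<sigma> ` subshift \<sigma>) (induced_map shift (subst_seq \<sigma> ` subshift \<sigma>))"
  unfolding conjugacy_def using homeo_subst[OF rec] induced_subst[OF rec] by simp

lemma continuous_shift_subst: "continuous_on UNIV (\<lambda>x. (shift ^^ m) (subst_seq \<sigma> x))"
  unfolding funpow_shift
  by (intro continuous_on_coordinatewise_then_product continuous_at_imp_continuous_on ballI isCont_subst_seq_coord)

lemma self_ind:
  assumes rec: "recognizable \<sigma>"
  shows "self_induced (subshift \<sigma>) shift"
proof -
  define X where "X = subshift \<sigma>"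
  define Z where "Z = subst_seq \<sigma> ` X"
  have ZX: "Z \<subseteq> X" unfolding Z_def X_def using subst_seq_in by auto
  have Zne: "Z \<noteq> {}" unfolding Z_def X_def using subshift_nonempty by auto
  have cZ: "compact Z" unfolding Z_def X_def
    by (rule compact_continuous_image[OF continuous_on_subset[OF continuous_subst_seq] compact_subshift]) simp
  have clZ: "closedin (top_of_set X) Z" using closed_subset[OF ZX compact_imp_closed[OF cZ]] .
  obtain M where M: "\<forall>a. length (subst_iter \<sigma> (Suc 0) a) \<le> M" using len_iter_bound by blast
  then have M': "\<And>a. length (\<sigma> a) \<le> M" by (simp add: subst_iter_1)
  define A where "A m = (\<lambda>x. (shift ^^ m) (subst_seq \<sigma> x)) ` (X \<inter> {x. m < length (\<sigma> (x 0))})" for m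
  have clA: "closed (A m)" for m
  proof -
    have "closed (- {b. length (\<sigma> b) \<in> {..m}})" using open_len by (rule closed_Compl)
    moreover have "- {b. length (\<sigma> b) \<in> {..m}} = {b. m < length (\<sigma> b)}" by auto
    ultimately have "closed ((\<lambda>x. x 0) -` {b. m < length (\<sigma> b)})"
      by (intro closed_vimage) simp_all
    moreover have "(\<lambda>x. x 0) -` {b. m < length (\<sigma> b)} = {x. m < length (\<sigma> (x 0))}" by auto
    ultimately have "compact (X \<inter> {x. m < length (\<sigma> (x 0))})"
      unfolding X_def using compact_Int_closed[OF compact_subshift] by simp
    then have "compact (A m)" unfolding A_def
      by (rule compact_continuous_image[OF continuous_on_subset[OF continuous_shift_subst], rotated]) simp
    then show ?thesis by (rule compact_imp_closed)
  qed
  have XZ: "X - Z = (\<Union>m\<in>{1..M}. A m)"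
  proof
    show "X - Z \<subseteq> (\<Union>m\<in>{1..M}. A m)"
    proof
      fix z assume z: "z \<in> X - Z"
      obtain x m where xm: "x \<in> X" "m < length (\<sigma> (x 0))" "z = (shift ^^ m) (subst_seq \<sigma> x)"
        using desub[OF rec, of z] z unfolding X_def by auto
      have "m \<noteq> 0" using xm z unfolding Z_def by auto
      moreover have "m \<le> M" using xm(2) M'[of "x 0"] by simp
      ultimately show "z \<in> (\<Union>m\<in>{1..M}. A m)" using xm unfolding A_def by auto
    qed
    show "(\<Union>m\<in>{1..M}. A m) \<subseteq> X - Z"
    proof
      fix z assume "z \<in> (\<Union>m\<in>{1..M}. A m)"
      then obtain m x where mx: "1 \<le> m" "x \<in> X" "m < length (\<sigma> (x 0))" "z = (shift ^^ m) (subst_seq \<sigma> x)"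
        unfolding A_def by auto
      have "z \<in> X" using mx unfolding X_def by (auto intro: funpow_shift_in subst_seq_in)
      moreover have "z \<notin> Z" using nonreturn[OF rec, of x m] mx unfolding Z_def X_def by auto
      ultimately show "z \<in> X - Z" by simp
    qed
  qed
  have clXZ: "closed (X - Z)" unfolding XZ by (intro closed_UN) (auto intro: clA)
  have opZ: "openin (top_of_set X) Z"
  proof -
    have "openin (top_of_set X) (X \<inter> - (X - Z))" using open_Compl[OF clXZ] by (rule openin_open_Int)
    moreover have "X \<inter> - (X - Z) = Z" using ZX by auto
    ultimately show ?thesis by simp
  qed
  have ZneX: "Z \<noteq> X"
  proof
    assume ZX': "Z = X"
    obtain x where x: "x \<in> X" "2 \<le> length (\<sigma> (x 0))" using exists_long unfolding X_def by blast
    have "(shift ^^ 1) (subst_seq \<sigma> x) \<notin> Z" using nonreturn[OF rec, of x 1] x unfolding Z_def X_def by auto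
    moreover have "(shift ^^ 1) (subst_seq \<sigma> x) \<in> X" using x unfolding X_def by (intro funpow_shift_in subst_seq_in)
    ultimately show False using ZX' by simp
  qed
  obtain g where g: "homeomorphism X Z (subst_seq \<sigma>) g" using homeo_subst[OF rec] unfolding X_def Z_def by blast
  have conj: "conjugacy g Z (induced_map shift Z) X shift"
    unfolding conjugacy_def
  proof (intro conjI ballI)
    show "\<exists>h. homeomorphism Z X g h" using homeomorphism_symD[OF g] by blast
    fix z assume "z \<in> Z"
    then obtain x where x: "x \<in> X" "z = subst_seq \<sigma> x" unfolding Z_def by blast
    have "induced_map shift Z z = subst_seq \<sigma> (shift x)" unfolding x(2) Z_def X_def
      by (rule induced_subst[OF rec x(1)[unfolded X_def]])
    moreover have "shift x \<in> X" using shift_in x(1) unfolding X_def by blast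
    ultimately have "g (induced_map shift Z z) = shift x" using g unfolding homeomorphism_def by simp
    moreover have "g z = x" using g x unfolding homeomorphism_def by simp
    ultimately show "g (induced_map shift Z z) = shift (g z)" by simp
  qed
  show ?thesis unfolding self_induced_def X_def[symmetric]
    using Zne ZX ZneX opZ clZ conj by blast
qed

end

theorem mainTheorem3:
  fixes \<sigma> :: "'a::metric_space \<Rightarrow> 'a list"
  assumes "alphabet_space (UNIV :: 'a set)"
    and "gen_substitution \<sigma>"
    and "primitive \<sigma>"
  shows "minimal_system (subshift \<sigma>) shift
    \<and> (recognizable \<sigma> \<and> aperiodic \<sigma> \<longrightarrow>
         minimal_cantor_system (subshift \<sigma>) shift
       \<and> self_induced (subshift \<sigma>) shift
       \<and> conjugacy (subst_seq \<sigma>) (subshift \<sigma>) shift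
            (subst_seq \<sigma> ` subshift \<sigma>) (induced_map shift (subst_seq \<sigma> ` subshift \<sigma>)))"
proof -
  interpret gsub \<sigma> using assms by unfold_locales
  show ?thesis using minimal min_cantor self_ind conj_main by blast
qed

end
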